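(* Let $\Bbbk$ be a field, $R=\Bbbk[x_1,\dots,x_m]$ with the standard $\mathbb Z^m$-grading, $L$ a Noetherian multigraded $R$-module with minimal multihomogeneous free presentation $E\xrightarrow{\Phi}G\to L\to 0$, and $S$ a multihomogeneous basis of $E$. Let $\alpha$ be a generic element of $\Lambda(L)$ and let $\omega$ be a total ordering of $I_\alpha$. Then for all $i$, \[ \dim_\Bbbk H_i(V(\alpha,\phi,\omega)_\bullet)=\begin{cases}\beta(\mathbf M_\alpha) & \text{if } i=|I_\alpha|-r(\mathbf M_\alpha),\\ 0&\text{otherwise.}\end{cases} \]
   Context: For nonempty $A\subseteq S$ let $\deg A\in\mathbb Z^m$ be the componentwise maximum of the multidegrees of the elements of $A$; $\Lambda(L)=\{\deg A:\emptyset\ne A\subseteq S\}$. An element $\alpha\in\Lambda(L)$ is generic if $\{A\subseteq S:\deg A=\alpha\}$ is a closed interval $\{A: I_\alpha\subseteq A\subseteq I^\alpha\}$ of the Boolean lattice of subsets of $S$; set $I(\alpha)=I^\alpha\setminus I_\alpha$. Regard $\Bbbk$ as an $R$-module via $x_i\mapsto 1$, let $W=G\otimes_R\Bbbk$, let $U_S$ be the $\Bbbk$-space with basis $\{e_a:a\in S\}$ identified with $E\otimes_R\Bbbk$ via $e_a=a\otimes1$, and $\phi=\Phi\otimes_R\Bbbk\colon U_S\to W$. For $B\subseteq S$ put $V_B=\phi(\operatorname{span}\{e_a:a\in B\})$. The matroid $\mathbf M_\alpha$ on $I_\alpha$ is the one represented by the composite $\operatorname{span}\{e_a:a\in I_\alpha\}\xrightarrow{\phi}W\to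 W/V_{I(\alpha)}$ (equivalently, the contraction of the restriction of $\mathbf M(\phi)$ to $I^\alpha$ by $I(\alpha)$); its rank is $r(\mathbf M_\alpha)=\dim V_{I^\alpha}-\dim V_{I(\alpha)}$ and its rank function is $r_\alpha(J)=\dim V_{I(\alpha)\cup J}-\dim V_{I(\alpha)}$. Its $\beta$-invariant is $\beta(\mathbf M_\alpha)=(-1)^{r_\alpha(I_\alpha)}\sum_{J\subseteq I_\alpha}(-1)^{|J|}r_\alpha(J)$. Subsets of $I_\alpha$ are identified with increasing sequences with respect to $\omega$. The complex $V(\alpha,\phi,\omega)_\bullet$ has $V(\alpha,\phi,\omega)_i=\bigoplus_{A\subseteq I_\alpha,\ |A|=i}V_{I^\alpha\setminus A}$ for $0\le i\le|I_\alpha|$, and its differential has, for $A\subseteq I_\alpha$ and $c\in I_\alpha\setminus A$, component $V_{I^\alpha\setminus(A\cup\{c\})}\to V_{I^\alpha\setminus A}$ equal to the inclusion times the sign of the permutation sorting $(c,I_\alpha\setminus(A\cup\{c\}))$ into increasing order (other components zero). *)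

theory Defs
  imports Complex_Main "HOL-Library.Function_Algebras"
begin

text \<open>Multidegrees in Z^m are functions nat => int vanishing outside {0..<m}.
  The degree of a nonempty finite set A of basis elements is the
  componentwise maximum of the multidegrees of its elements.\<close>

definition mdeg_set :: "('s \<Rightarrow> nat \<Rightarrow> int) \<Rightarrow> 's set \<Rightarrow> nat \<Rightarrow> int" where
  "mdeg_set d A = (\<lambda>i. Max ((\<lambda>a. d a i) ` A))"

definition Lambda :: "'s set \<Rightarrow> ('s \<Rightarrow> nat \<Rightarrow> int) \<Rightarrow> (nat \<Rightarrow> int) set" where
  "Lambda S d = mdeg_set d ` {A. A \<subseteq> S \<and> A \<noteq> {}}"

definition fibre :: "'s set \<Rightarrow> ('s \<Rightarrow> nat \<Rightarrow> int) \<Rightarrow> (nat \<Rightarrow> int) \<Rightarrow> 's set set" where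
  "fibre S d \<alpha> = {A. A \<subseteq> S \<and> A \<noteq> {} \<and> mdeg_set d A = \<alpha>}"

text \<open>alpha is generic with interval endpoints Il (= I_alpha) and Iu (= I^alpha).\<close>
definition generic_with :: "'s set \<Rightarrow> ('s \<Rightarrow> nat \<Rightarrow> int) \<Rightarrow> (nat \<Rightarrow> int) \<Rightarrow> 's set \<Rightarrow> 's set \<Rightarrow> bool" where
  "generic_with S d \<alpha> Il Iu \<longleftrightarrow> \<alpha> \<in> Lambda S d \<and> fibre S d \<alpha> = {A. Il \<subseteq> A \<and> A \<subseteq> Iu}"

text \<open>R = k[x_0..x_{m-1}], Z^m-graded.  G is free on a finite homogeneous basis Gb
  (multidegrees dG), E is free on the finite homogeneous basis S (multidegrees dS),
  and L = coker Phi.  A multihomogeneous (degree-preserving) R-linear map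
  Phi : E -> G is Phi(e_a) = sum_g c g a * x^(dS a - dG g) * e_g, where
  c g a \<noteq> 0 only if dG g \<le> dS a (multihomogeneous polynomials of degree
  v in the standard grading are scalar multiples of the monomial x^v).
  Specialising x_i |-> 1 gives phi(e_a) = (c g a)_g in W = k^Gb.\<close>

definition sW :: "'k::field \<Rightarrow> ('g \<Rightarrow> 'k) \<Rightarrow> ('g \<Rightarrow> 'k)" where
  "sW a v = (\<lambda>g. a * v g)"

definition phi_vec :: "'g set \<Rightarrow> ('g \<Rightarrow> 's \<Rightarrow> 'k::field) \<Rightarrow> 's \<Rightarrow> 'g \<Rightarrow> 'k" where
  "phi_vec Gb c a = (\<lambda>g. if g \<in> Gb then c g a else 0)"

text \<open>Minimality: (1) Phi(E) \<subseteq> mG, i.e. no entry of Phi is a nonzero constant;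
  (2) ker Phi \<subseteq> mE, i.e. (graded Nakayama) no Phi(e_a) lies in the R-span of the
  Phi(e_b), b \<noteq> a; comparing homogeneous components of degree dS a, this says
  phi(e_a) is not in the k-span of the phi(e_b) with b \<noteq> a, dS b \<le> dS a.\<close>
definition min_mh_presentation ::
  "nat \<Rightarrow> 'g set \<Rightarrow> ('g \<Rightarrow> nat \<Rightarrow> int) \<Rightarrow> 's set \<Rightarrow> ('s \<Rightarrow> nat \<Rightarrow> int) \<Rightarrow> ('g \<Rightarrow> 's \<Rightarrow> 'k::field) \<Rightarrow> bool" where
  "min_mh_presentation m Gb dG S dS c \<longleftrightarrow>
     finite Gb \<and> finite S \<and>
     (\<forall>g i. m \<le> i \<longrightarrow> dG g i = 0) \<and> (\<forall>a i. m \<le> i \<longrightarrow> dS a i = 0) \<and>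
     (\<forall>g\<in>Gb. \<forall>a\<in>S. c g a \<noteq> 0 \<longrightarrow> dG g \<le> dS a) \<and>
     (\<forall>g\<in>Gb. \<forall>a\<in>S. c g a \<noteq> 0 \<longrightarrow> dG g \<noteq> dS a) \<and>
     (\<forall>a\<in>S. phi_vec Gb c a \<notin>
        Modules.module.span sW (phi_vec Gb c ` {b \<in> S. b \<noteq> a \<and> dS b \<le> dS a}))"

definition VB :: "'g set \<Rightarrow> ('g \<Rightarrow> 's \<Rightarrow> 'k::field) \<Rightarrow> 's set \<Rightarrow> ('g \<Rightarrow> 'k) set" where
  "VB Gb c B = Modules.module.span sW (phi_vec Gb c ` B)"

definition dimW :: "('g \<Rightarrow> 'k::field) set \<Rightarrow> nat" where
  "dimW V = Vector_Spaces.vector_space.dim sW V"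

text \<open>rank function r_alpha(J) = dim V_{I(alpha) \<union> J} - dim V_{I(alpha)}, I(alpha) = Iu - Il\<close>
definition rank_alpha :: "'g set \<Rightarrow> ('g \<Rightarrow> 's \<Rightarrow> 'k::field) \<Rightarrow> 's set \<Rightarrow> 's set \<Rightarrow> 's set \<Rightarrow> int" where
  "rank_alpha Gb c Il Iu J =
     int (dimW (VB Gb c ((Iu - Il) \<union> J))) - int (dimW (VB Gb c (Iu - Il)))"

definition beta_alpha :: "'g set \<Rightarrow> ('g \<Rightarrow> 's \<Rightarrow> 'k::field) \<Rightarrow> 's set \<Rightarrow> 's set \<Rightarrow> int" where
  "beta_alpha Gb c Il Iu =
     (-1) ^ nat (rank_alpha Gb c Il Iu Il) *
     (\<Sum>J\<in>Pow Il. (-1) ^ card J * rank_alpha Gb c Il Iu J)"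

definition inc_seq :: "'s rel \<Rightarrow> 's set \<Rightarrow> 's list" where
  "inc_seq \<omega> B = (THE xs. set xs = B \<and> distinct xs \<and> sorted_wrt (\<lambda>x y. (x, y) \<in> \<omega>) xs)"

definition inversions :: "'s rel \<Rightarrow> 's list \<Rightarrow> nat" where
  "inversions \<omega> xs = card {(i, j). i < j \<and> j < length xs \<and> (xs ! j, xs ! i) \<in> \<omega> \<and> xs ! i \<noteq> xs ! j}"

definition sort_sign :: "'s rel \<Rightarrow> 's list \<Rightarrow> 'k::field" where
  "sort_sign \<omega> xs = (-1) ^ inversions \<omega> xs"

text \<open>Elements of V_i = \<oplus>_{A \<subseteq> Il, |A| = i} V_{Iu - A}, as families indexed by subsets.\<close>
definition sC :: "'k::field \<Rightarrow> ('s set \<Rightarrow> 'g \<Rightarrow> 'k) \<Rightarrow> ('s set \<Rightarrow> 'g \<Rightarrow> 'k)" where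
  "sC a x = (\<lambda>A g. a * x A g)"

definition cpx :: "'g set \<Rightarrow> ('g \<Rightarrow> 's \<Rightarrow> 'k::field) \<Rightarrow> 's set \<Rightarrow> 's set \<Rightarrow> nat \<Rightarrow> ('s set \<Rightarrow> 'g \<Rightarrow> 'k) set" where
  "cpx Gb c Il Iu i =
     {x. \<forall>A. (A \<subseteq> Il \<and> card A = i \<longrightarrow> x A \<in> VB Gb c (Iu - A)) \<and>
            (\<not> (A \<subseteq> Il \<and> card A = i) \<longrightarrow> x A = (\<lambda>g. 0))}"

definition cpx_d :: "'s rel \<Rightarrow> 's set \<Rightarrow> ('s set \<Rightarrow> 'g \<Rightarrow> 'k::field) \<Rightarrow> ('s set \<Rightarrow> 'g \<Rightarrow> 'k)" where
  "cpx_d \<omega> Il x = (\<lambda>A g. \<Sum>e\<in>Il - A.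
       sort_sign \<omega> (e # inc_seq \<omega> (Il - insert e A)) * x (insert e A) g)"

definition dimC :: "('s set \<Rightarrow> 'g \<Rightarrow> 'k::field) set \<Rightarrow> nat" where
  "dimC V = Vector_Spaces.vector_space.dim sC V"

definition homology_dim :: "'g set \<Rightarrow> ('g \<Rightarrow> 's \<Rightarrow> 'k::field) \<Rightarrow> 's set \<Rightarrow> 's set \<Rightarrow> 's rel \<Rightarrow> nat \<Rightarrow> int" where
  "homology_dim Gb c Il Iu \<omega> i =
     int (dimC {x \<in> cpx Gb c Il Iu i. cpx_d \<omega> Il x = (\<lambda>A g. 0)})
     - int (dimC (cpx_d \<omega> Il ` cpx Gb c Il Iu (Suc i)))"

end

theory Submission imports Defs begin


context vector_space_pair begin

lemma rank_nullity_fin: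
  assumes lin: "Vector_Spaces.linear s1 s2 f" and sub: "vs1.subspace V" and fin: "finite F" "V \<subseteq> vs1.span F"
  shows "vs1.dim V = vs1.dim {x\<in>V. f x = 0} + vs2.dim (f ` V)"
proof -
  let ?N = "{x\<in>V. f x = 0}"
  obtain K where K: "K \<subseteq> ?N" "vs1.independent K" "?N \<subseteq> vs1.span K" "card K = vs1.dim ?N"
    by (rule vs1.basis_exists)
  obtain B where B: "K \<subseteq> B" "B \<subseteq> V" "vs1.independent B" "V \<subseteq> vs1.span B"
    using vs1.maximal_independent_subset_extend[of K V] K by auto
  have finB: "finite B" using vs1.independent_span_bound[OF fin(1) B(3)] B(2) fin(2) by auto
  have finK: "finite K" using finB B(1) finite_subset by auto
  have dimV: "vs1.dim V = card B" using vs1.basis_card_eq_dim[OF B(2,4,3)] by simp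
  define C where "C = B - K"
  have finC: "finite C" using finB C_def by auto
  have fK: "\<forall>k\<in>K. f k = 0" using K(1) by auto
  have claim: "\<forall>c\<in>t. u c = 0" if t: "finite t" "t \<subseteq> C" and s: "(\<Sum>c\<in>t. u c *b f c) = 0" for t u
  proof -
    define x where "x = (\<Sum>c\<in>t. u c *a c)"
    have fx: "f x = 0" using s by (simp add: x_def linear_sum[OF lin] linear_scale[OF lin])
    have "x \<in> V" unfolding x_def
      by (rule vs1.subspace_sum[OF sub]) (use t B(2) C_def vs1.subspace_scale[OF sub] in auto)
    with fx K(3) have "x \<in> vs1.span K" by auto
    then obtain w where w: "(\<Sum>k\<in>K. w k *a k) = x"
      using vs1.span_finite[OF finK] by auto
    define u' where "u' v = (if v \<in> t then u v else - w v)" for v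
    have disj: "t \<inter> K = {}" using t C_def by auto
    have "(\<Sum>v\<in>t \<union> K. u' v *a v) = (\<Sum>v\<in>t. u' v *a v) + (\<Sum>v\<in>K. u' v *a v)"
      by (rule sum.union_disjoint) (use t finK disj in auto)
    also have "(\<Sum>v\<in>t. u' v *a v) = x" unfolding x_def by (rule sum.cong) (auto simp: u'_def)
    also have "(\<Sum>v\<in>K. u' v *a v) = (\<Sum>v\<in>K. - (w v *a v))"
      by (rule sum.cong) (use disj in \<open>auto simp: u'_def\<close>)
    also have "\<dots> = - x" using w by (simp add: sum_negf)
    finally have z: "(\<Sum>v\<in>t \<union> K. u' v *a v) = 0" by simp
    have "\<forall>v\<in>t \<union> K. u' v = 0"
    proof (rule ccontr)
      assume "\<not> ?thesis"
      then have "vs1.dependent B"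
        unfolding vs1.dependent_explicit
        by (intro exI[of _ "t \<union> K"] exI[of _ u']) (use t finK z B(1) C_def in auto)
      with B(3) show False by simp
    qed
    then show ?thesis by (metis UnI1 u'_def)
  qed
  have inj: "inj_on f C"
  proof (rule inj_onI, rule ccontr)
    fix c1 c2 assume c: "c1 \<in> C" "c2 \<in> C" "f c1 = f c2" "c1 \<noteq> c2"
    define u :: "'b \<Rightarrow> 'a" where "u v = (if v = c1 then 1 else -1)" for v
    have "(\<Sum>c\<in>{c1,c2}. u c *b f c) = 0" using c by (simp add: u_def)
    from claim[OF _ _ this] c show False by (auto simp: u_def)
  qed
  have indep: "vs2.independent (f ` C)"
  proof
    assume "vs2.dependent (f ` C)"
    then obtain t u where tu: "finite t" "t \<subseteq> f ` C" "(\<Sum>v\<in>t. u v *b v) = 0" "\<exists>v\<in>t. u v \<noteq> 0"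
      unfolding vs2.dependent_explicit by blast
    define t' where "t' = C \<inter> f -` t"
    have tt': "t = f ` t'" using tu(2) t'_def by auto
    have inj': "inj_on f t'" using inj t'_def by (auto intro: inj_on_subset)
    have "(\<Sum>c\<in>t'. u (f c) *b f c) = 0" using tu(3) unfolding tt' sum.reindex[OF inj'] by simp
    from claim[OF _ _ this] have "\<forall>c\<in>t'. u (f c) = 0" using finC t'_def by auto
    with tu(4) tt' show False by auto
  qed
  have spanf: "f ` V \<subseteq> vs2.span (f ` C)"
  proof -
    have "f ` V \<subseteq> f ` vs1.span B" using B(4) by auto
    also have "\<dots> = vs2.span (f ` B)" by (simp add: linear_span_image[OF lin])
    also have "\<dots> \<subseteq> vs2.span (insert 0 (f ` C))"
      by (rule vs2.span_mono) (use fK C_def in auto)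
    finally show ?thesis by simp
  qed
  have "vs2.dim (f ` V) = card (f ` C)"
    by (rule vs2.dim_unique[OF _ spanf indep refl]) (use B(2) C_def in auto)
  also have "\<dots> = card C" using card_image[OF inj] .
  finally have "vs2.dim (f ` V) = card C" .
  moreover have "card B = card K + card C"
    using card_Diff_subset[OF finK B(1)] card_mono[OF finB B(1)] C_def by simp
  ultimately show ?thesis using dimV K(4) by simp
qed

end

interpretation W: vector_space "sW :: 'k::field \<Rightarrow> ('g \<Rightarrow> 'k) \<Rightarrow> ('g \<Rightarrow> 'k)"
  by unfold_locales (auto simp: sW_def fun_eq_iff algebra_simps)

interpretation C: vector_space "sC :: 'k::field \<Rightarrow> ('s set \<Rightarrow> 'g \<Rightarrow> 'k) \<Rightarrow> ('s set \<Rightarrow> 'g \<Rightarrow> 'k)"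
  by unfold_locales (auto simp: sC_def fun_eq_iff algebra_simps)

interpretation CW: vector_space_pair "sC :: 'k::field \<Rightarrow> ('s set \<Rightarrow> 'g \<Rightarrow> 'k) \<Rightarrow> _" "sW :: 'k \<Rightarrow> ('g \<Rightarrow> 'k) \<Rightarrow> _" ..
interpretation CC: vector_space_pair "sC :: 'k::field \<Rightarrow> ('s set \<Rightarrow> 'g \<Rightarrow> 'k) \<Rightarrow> _" "sC :: 'k \<Rightarrow> ('s set \<Rightarrow> 'g \<Rightarrow> 'k) \<Rightarrow> _" ..

lemma sum_fun_app: "(\<Sum>a\<in>S. f a) x = (\<Sum>a\<in>S. f a x)"
  by (induct S rule: infinite_finite_induct) auto

lemma sC_app: "sC a x A = sW a (x A)" by (simp add: sC_def sW_def)

definition sg :: "'s rel \<Rightarrow> 's set \<Rightarrow> 's \<Rightarrow> 's set \<Rightarrow> 'k::field" where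
  "sg \<omega> E e A = (-1) ^ card {b \<in> E - insert e A. (b, e) \<in> \<omega>}"

definition dd :: "'s rel \<Rightarrow> 's set \<Rightarrow> ('s set \<Rightarrow> 'g \<Rightarrow> 'k::field) \<Rightarrow> ('s set \<Rightarrow> 'g \<Rightarrow> 'k)" where
  "dd \<omega> E x = (\<lambda>A g. \<Sum>e\<in>E - A. sg \<omega> E e A * x (insert e A) g)"

definition CX :: "('g \<Rightarrow> 'k::field) set \<Rightarrow> ('s \<Rightarrow> 'g \<Rightarrow> 'k) \<Rightarrow> 's set \<Rightarrow> nat \<Rightarrow> ('s set \<Rightarrow> 'g \<Rightarrow> 'k) set" where
  "CX X v E i = {x. \<forall>A. (A \<subseteq> E \<and> card A = i \<longrightarrow> x A \<in> W.span (X \<union> v ` (E - A))) \<and>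
                      (\<not> (A \<subseteq> E \<and> card A = i) \<longrightarrow> x A = 0)}"

lemma dd_vec: "dd \<omega> E x A = (\<Sum>e\<in>E - A. sW (sg \<omega> E e A) (x (insert e A)))"
  by (simp add: dd_def sum_fun_app sW_def fun_eq_iff)

lemma dd_linear: "Vector_Spaces.linear sC sC (dd \<omega> E)"
  unfolding Vector_Spaces.linear_iff
  by (auto simp: C.vector_space_axioms dd_def sC_def fun_eq_iff sum.distrib sum_distrib_left
      algebra_simps)

lemma dd_add: "dd \<omega> E (x + y) = dd \<omega> E x + dd \<omega> E y"
  by (auto simp: dd_def fun_eq_iff sum.distrib algebra_simps)

lemma dd_diff: "dd \<omega> E (x - y) = dd \<omega> E x - dd \<omega> E y"
  by (auto simp: dd_def fun_eq_iff sum_subtractf algebra_simps)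

lemma dd_zero[simp]: "dd \<omega> E 0 = 0"
  by (auto simp: dd_def fun_eq_iff)

lemma CX_zero[simp]: "0 \<in> CX X v E i"
  unfolding CX_def using W.span_zero by auto

lemma CX_subspace: "C.subspace (CX X v E i)"
  unfolding C.subspace_def
  by (auto simp: CX_def sC_app W.span_add W.span_scale W.span_zero)

lemma CX_add: "x \<in> CX X v E i \<Longrightarrow> y \<in> CX X v E i \<Longrightarrow> x + y \<in> CX X v E i"
  by (auto simp: CX_def W.span_add)

lemma CX_diff: "x \<in> CX X v E i \<Longrightarrow> y \<in> CX X v E i \<Longrightarrow> x - y \<in> CX X v E i"
  by (auto simp: CX_def W.span_diff)

lemma CXD: "x \<in> CX X v E i \<Longrightarrow> A \<subseteq> E \<Longrightarrow> card A = i \<Longrightarrow> x A \<in> W.span (X \<union> v ` (E - A))"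
  by (auto simp: CX_def)

lemma CXD0: "x \<in> CX X v E i \<Longrightarrow> \<not> (A \<subseteq> E \<and> card A = i) \<Longrightarrow> x A = 0"
  by (auto simp: CX_def)

lemma CXI: "(\<And>A. A \<subseteq> E \<Longrightarrow> card A = i \<Longrightarrow> x A \<in> W.span (X \<union> v ` (E - A))) \<Longrightarrow>
   (\<And>A. \<not> (A \<subseteq> E \<and> card A = i) \<Longrightarrow> x A = 0) \<Longrightarrow> x \<in> CX X v E i"
  by (auto simp: CX_def)

lemma dd_mem:
  assumes fin: "finite E" and y: "y \<in> CX X v E (Suc i)"
  shows "dd \<omega> E y \<in> CX X v E i"
proof (rule CXI)
  fix A assume A: "A \<subseteq> E" "card A = i"
  have "(\<Sum>e\<in>E - A. sW (sg \<omega> E e A) (y (insert e A))) \<in> W.span (X \<union> v ` (E - A))"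
  proof (rule W.span_sum, rule W.span_scale)
    fix e assume e: "e \<in> E - A"
    have fA: "finite A" using A fin finite_subset by auto
    have "y (insert e A) \<in> W.span (X \<union> v ` (E - insert e A))"
      by (rule CXD[OF y]) (use A e fA in auto)
    also have "\<dots> \<subseteq> W.span (X \<union> v ` (E - A))" by (rule W.span_mono) auto
    finally show "y (insert e A) \<in> W.span (X \<union> v ` (E - A))" .
  qed
  then show "dd \<omega> E y A \<in> W.span (X \<union> v ` (E - A))" by (simp add: dd_vec)
next
  fix A assume A: "\<not> (A \<subseteq> E \<and> card A = i)"
  have "y (insert e A) = 0" if e: "e \<in> E - A" for e
  proof (rule CXD0[OF y])
    show "\<not> (insert e A \<subseteq> E \<and> card (insert e A) = Suc i)"
    proof
      assume h: "insert e A \<subseteq> E \<and> card (insert e A) = Suc i"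
      then have "finite A" using fin finite_subset by auto
      with h e A show False by auto
    qed
  qed
  then show "dd \<omega> E y A = 0" by (simp add: dd_def fun_eq_iff)
qed

lemma CX_big: assumes "finite E" "x \<in> CX X v E i" "card E < i" shows "x = 0"
proof
  fix A show "x A = 0 A"
    using CXD0[OF assms(2), of A] card_mono[OF assms(1), of A] assms(3) by fastforce
qed

lemma dd_CX0: assumes "x \<in> CX X v E 0" "finite E" shows "dd \<omega> E x = 0"
proof -
  have "x (insert e A) = 0" for e A
    by (rule CXD0[OF assms(1)]) (use assms(2) finite_subset in fastforce)
  then show ?thesis by (simp add: dd_def fun_eq_iff)
qed

lemma lo_antisym: "linear_order_on D \<omega> \<Longrightarrow> (a, b) \<in> \<omega> \<Longrightarrow> (b, a) \<in> \<omega> \<Longrightarrow> a = b"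
  unfolding linear_order_on_def partial_order_on_def antisym_def by blast

lemma lo_total: "linear_order_on D \<omega> \<Longrightarrow> a \<in> D \<Longrightarrow> b \<in> D \<Longrightarrow> a \<noteq> b \<Longrightarrow> (a, b) \<in> \<omega> \<or> (b, a) \<in> \<omega>"
  unfolding linear_order_on_def total_on_def by blast

lemma lo_refl: "linear_order_on D \<omega> \<Longrightarrow> a \<in> D \<Longrightarrow> (a, a) \<in> \<omega>"
  unfolding linear_order_on_def partial_order_on_def preorder_on_def refl_on_def by blast

lemma lo_trans: "linear_order_on D \<omega> \<Longrightarrow> (a, b) \<in> \<omega> \<Longrightarrow> (b, c) \<in> \<omega> \<Longrightarrow> (a, c) \<in> \<omega>"
  unfolding linear_order_on_def partial_order_on_def preorder_on_def trans_def by blast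

lemma lo_max:
  assumes "linear_order_on D \<omega>" "finite E" "E \<noteq> {}" "E \<subseteq> D"
  shows "\<exists>m\<in>E. \<forall>b\<in>E. (b, m) \<in> \<omega>"
  using assms(2,3,4)
proof (induction E rule: finite_ne_induct)
  case (singleton x) then show ?case using lo_refl[OF assms(1)] by auto
next
  case (insert x F)
  then obtain m where m: "m \<in> F" "\<forall>b\<in>F. (b, m) \<in> \<omega>" by auto
  show ?case
  proof (cases "(x, m) \<in> \<omega>")
    case True then show ?thesis using m by auto
  next
    case False
    then have "(m, x) \<in> \<omega>" using lo_total[OF assms(1), of x m] insert m by auto
    then show ?thesis using m lo_trans[OF assms(1)] lo_refl[OF assms(1)] insert by blast
  qed
qed

lemma lo_min:
  assumes "linear_order_on D \<omega>" "finite E" "E \<noteq> {}" "E \<subseteq> D"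
  shows "\<exists>m\<in>E. \<forall>b\<in>E. (m, b) \<in> \<omega>"
proof -
  have "linear_order_on D (\<omega>\<inverse>)" using assms(1) by simp
  from lo_max[OF this assms(2-4)] show ?thesis by auto
qed

lemma sg_swap:
  assumes lo: "linear_order_on D \<omega>" and fin: "finite E"
    and ef: "e \<in> E - A" "f \<in> E - A" "e \<noteq> f" "(e, f) \<in> \<omega>"
  shows "sg \<omega> E f A = - sg \<omega> E f (insert e A)" "sg \<omega> E e (insert f A) = sg \<omega> E e A"
proof -
  have "{b \<in> E - insert f A. (b, f) \<in> \<omega>} = insert e {b \<in> E - insert f (insert e A). (b, f) \<in> \<omega>}"
    using ef by auto
  moreover have "e \<notin> {b \<in> E - insert f (insert e A). (b, f) \<in> \<omega>}" by auto
  ultimately have "card {b \<in> E - insert f A. (b, f) \<in> \<omega>} = Suc (card {b \<in> E - insert f (insert e A). (b, f) \<in> \<omega>})"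
    using fin by simp
  then show "sg \<omega> E f A = - sg \<omega> E f (insert e A)"
    by (simp add: sg_def insert_commute)
  have "{b \<in> E - insert e (insert f A). (b, e) \<in> \<omega>} = {b \<in> E - insert e A. (b, e) \<in> \<omega>}"
    using ef lo_antisym[OF lo, of e f] by auto
  then show "sg \<omega> E e (insert f A) = sg \<omega> E e A" by (simp add: sg_def)
qed

lemma dd_dd:
  assumes lo: "linear_order_on D \<omega>" and ED: "E \<subseteq> D" and fin: "finite E"
  shows "dd \<omega> E (dd \<omega> E x) = 0"
proof (rule ext, rule ext)
  fix A g
  define T where "T p = sg \<omega> E (fst p) A * sg \<omega> E (snd p) (insert (fst p) A) *
      x (insert (snd p) (insert (fst p) A)) g" for p
  define P where "P = Sigma (E - A) (\<lambda>e. E - insert e A)"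
  define P1 where "P1 = {p \<in> P. p \<in> \<omega>}"
  define P2 where "P2 = {p \<in> P. prod.swap p \<in> \<omega>}"
  have finP: "finite P" using fin by (simp add: P_def)
  have PU: "P = P1 \<union> P2"
    using lo_total[OF lo] ED by (auto simp: P_def P1_def P2_def) blast
  have Pdisj: "P1 \<inter> P2 = {}"
    using lo_antisym[OF lo] by (auto simp: P_def P1_def P2_def)
  have "dd \<omega> E (dd \<omega> E x) A g = (\<Sum>e\<in>E - A. \<Sum>f\<in>E - insert e A. T (e, f))"
    by (simp add: dd_def T_def sum_distrib_left mult.assoc)
  also have "\<dots> = sum T P" unfolding P_def using sum.Sigma[of "E - A" "\<lambda>e. E - insert e A" "\<lambda>e f. T (e, f)"] fin by simp
  also have "\<dots> = sum T P1 + sum T P2"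
    unfolding PU by (rule sum.union_disjoint) (use finP PU Pdisj in auto)
  also have "sum T P2 = sum (T \<circ> prod.swap) P1"
  proof -
    have "P2 = prod.swap ` P1" by (force simp: P_def P1_def P2_def)
    moreover have "inj_on prod.swap P1" by (rule inj_on_subset[of _ UNIV]) auto
    ultimately show ?thesis by (simp add: sum.reindex)
  qed
  also have "sum (T \<circ> prod.swap) P1 = sum (\<lambda>p. - T p) P1"
  proof (rule sum.cong[OF refl])
    fix p assume p: "p \<in> P1"
    obtain e f where pe: "p = (e, f)" by fastforce
    have ef: "e \<in> E - A" "f \<in> E - A" "e \<noteq> f" "(e, f) \<in> \<omega>"
      using p by (auto simp: pe P1_def P_def)
    show "(T \<circ> prod.swap) p = - T p"
      by (simp add: pe T_def insert_commute sg_swap[OF lo fin ef])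
  qed
  finally show "dd \<omega> E (dd \<omega> E x) A g = 0 A g" by (simp add: sum_negf)
qed

lemma sg_sq[simp]: "sg \<omega> E e A * sg \<omega> E e A = 1" "sg \<omega> E e A * (sg \<omega> E e A * a) = a"
  by (simp_all add: sg_def)

definition sh :: "'s \<Rightarrow> ('s set \<Rightarrow> 'g \<Rightarrow> 'k::field) \<Rightarrow> ('s set \<Rightarrow> 'g \<Rightarrow> 'k)" where
  "sh m z = (\<lambda>B. if m \<in> B then 0 else z (insert m B))"

lemma sg_drop:
  assumes lo: "linear_order_on D \<omega>" and e: "e \<noteq> m" "(e, m) \<in> \<omega>"
  shows "sg \<omega> E e A = sg \<omega> (E - {m}) e A"
proof -
  have "{b \<in> E - insert e A. (b, e) \<in> \<omega>} = {b \<in> E - {m} - insert e A. (b, e) \<in> \<omega>}"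
    using e lo_antisym[OF lo, of e m] by auto
  then show ?thesis by (simp add: sg_def)
qed

lemma sg_m:
  assumes mx: "\<forall>b\<in>E. (b, m) \<in> \<omega>"
  shows "sg \<omega> E m A = (-1) ^ card (E - insert m A)"
proof -
  have "{b \<in> E - insert m A. (b, m) \<in> \<omega>} = E - insert m A" using mx by auto
  then show ?thesis by (simp add: sg_def)
qed

lemma sg_m_insert:
  assumes mx: "\<forall>b\<in>E. (b, m) \<in> \<omega>" and fin: "finite E" and e: "e \<in> E" "e \<notin> B" "e \<noteq> m"
  shows "sg \<omega> E m (insert e B) = - sg \<omega> E m B"
proof -
  have "E - insert m B = insert e (E - insert m (insert e B))" using e by auto
  then have "card (E - insert m B) = Suc (card (E - insert m (insert e B)))" using fin by simp
  then show ?thesis by (simp add: sg_m[OF mx])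
qed

lemma D1:
  assumes lo: "linear_order_on D \<omega>" and fin: "finite E" and m: "m \<in> E" and mx: "\<forall>b\<in>E. (b, m) \<in> \<omega>"
    and A: "m \<notin> A"
  shows "dd \<omega> E z A g = dd \<omega> (E - {m}) z A g + sg \<omega> E m A * z (insert m A) g"
proof -
  have EA: "E - A = insert m (E - {m} - A)" using m A by auto
  have "dd \<omega> E z A g = sg \<omega> E m A * z (insert m A) g + (\<Sum>e\<in>E - {m} - A. sg \<omega> E e A * z (insert e A) g)"
    unfolding dd_def EA by (subst sum.insert) (use fin in auto)
  also have "(\<Sum>e\<in>E - {m} - A. sg \<omega> E e A * z (insert e A) g) = dd \<omega> (E - {m}) z A g"
    unfolding dd_def
  proof (rule sum.cong[OF refl])
    fix e assume e: "e \<in> E - {m} - A"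
    then have eq: "sg \<omega> E e A = sg \<omega> (E - {m}) e A" using sg_drop[OF lo, of e m E A] mx by auto
    show "sg \<omega> E e A * z (insert e A) g = sg \<omega> (E - {m}) e A * z (insert e A) g" by (simp only: eq)
  qed
  finally show ?thesis by simp
qed

lemma D2:
  assumes lo: "linear_order_on D \<omega>" and fin: "finite E" and m: "m \<in> E" and mx: "\<forall>b\<in>E. (b, m) \<in> \<omega>"
    and B: "m \<notin> B"
  shows "dd \<omega> E z (insert m B) = dd \<omega> (E - {m}) (sh m z) B"
proof (rule ext)
  fix g
  have EB: "E - insert m B = E - {m} - B" by auto
  show "dd \<omega> E z (insert m B) g = dd \<omega> (E - {m}) (sh m z) B g"
    unfolding dd_def EB
  proof (rule sum.cong[OF refl])
    fix e assume e: "e \<in> E - {m} - B"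
    have "sg \<omega> E e (insert m B) = sg \<omega> (E - {m}) e (insert m B)"
      using sg_drop[OF lo, of e m] mx e by auto
    also have "\<dots> = sg \<omega> (E - {m}) e B"
    proof -
      have "{b \<in> E - {m} - insert e (insert m B). (b, e) \<in> \<omega>} = {b \<in> E - {m} - insert e B. (b, e) \<in> \<omega>}"
        by auto
      then show ?thesis by (simp add: sg_def)
    qed
    finally have eq: "sg \<omega> E e (insert m B) = sg \<omega> (E - {m}) e B" .
    have eq2: "sh m z (insert e B) g = z (insert e (insert m B)) g" using e B by (simp add: sh_def insert_commute, metis)
    show "sg \<omega> E e (insert m B) * z (insert e (insert m B)) g =
        sg \<omega> (E - {m}) e B * sh m z (insert e B) g"
      by (simp only: eq eq2)
  qed
qed

lemma cone:
  assumes lo: "linear_order_on D \<omega>" and fin: "finite E" and m: "m \<in> E" and mx: "\<forall>b\<in>E. (b, m) \<in> \<omega>"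
    and z: "z \<in> CX X v E i" and cyc: "\<And>B. m \<notin> B \<Longrightarrow> dd \<omega> E z B = 0"
    and hyp: "\<And>A. A \<subseteq> E - {m} \<Longrightarrow> card A = i \<Longrightarrow> z A \<in> W.span (X \<union> v ` (E - {m} - A))"
  shows "\<exists>y\<in>CX X v E (Suc i). dd \<omega> E y = z"
proof -
  define y where "y A = (if m \<in> A then sW (sg \<omega> E m (A - {m})) (z (A - {m})) else 0)" for A
  have "y \<in> CX X v E (Suc i)"
  proof (rule CXI)
    fix A assume A: "A \<subseteq> E" "card A = Suc i"
    show "y A \<in> W.span (X \<union> v ` (E - A))"
    proof (cases "m \<in> A")
      case True
      have fA: "finite A" using A fin finite_subset by auto
      have "z (A - {m}) \<in> W.span (X \<union> v ` (E - {m} - (A - {m})))"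
        by (rule hyp) (use A True fA in auto)
      moreover have "E - {m} - (A - {m}) = E - A" using True by auto
      ultimately show ?thesis using True by (simp add: y_def W.span_scale)
    qed (simp add: y_def W.span_zero)
  next
    fix A assume A: "\<not> (A \<subseteq> E \<and> card A = Suc i)"
    show "y A = 0"
    proof (cases "m \<in> A")
      case True
      have "z (A - {m}) = 0"
      proof (rule CXD0[OF z])
        show "\<not> (A - {m} \<subseteq> E \<and> card (A - {m}) = i)"
        proof
          assume h: "A - {m} \<subseteq> E \<and> card (A - {m}) = i"
          then have "A \<subseteq> E" using m by auto
          moreover then have "finite A" using fin finite_subset by auto
          ultimately show False using h A True card_Suc_Diff1[of A m] by auto
        qed
      qed
      then show ?thesis using True by (simp add: y_def sW_def fun_eq_iff)
    qed (simp add: y_def)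
  qed
  moreover have "dd \<omega> E y = z"
  proof (rule ext, rule ext)
    fix A g
    show "dd \<omega> E y A g = z A g"
    proof (cases "m \<in> A")
      case False
      have "dd \<omega> (E - {m}) y A g = 0"
        unfolding dd_def by (rule sum.neutral) (use False in \<open>auto simp: y_def\<close>)
      moreover have "insert m A - {m} = A" using False by auto
      ultimately show ?thesis using D1[OF lo fin m mx False, of y g]
        by (simp add: y_def sW_def)
    next
      case True
      define B where "B = A - {m}"
      have AB: "A = insert m B" "m \<notin> B" using True B_def by auto
      have "dd \<omega> E y A g = dd \<omega> (E - {m}) (sh m y) B g" using fun_cong[OF D2[OF lo fin m mx AB(2)], of y g] AB by simp
      also have "\<dots> = (\<Sum>e\<in>E - {m} - B. - sg \<omega> E m B * (sg \<omega> (E - {m}) e B * z (insert e B) g))"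
        unfolding dd_def
      proof (rule sum.cong[OF refl])
        fix e assume e: "e \<in> E - {m} - B"
        have "sh m y (insert e B) g = sg \<omega> E m (insert e B) * z (insert e B) g"
        proof -
          have "m \<noteq> e" "m \<notin> insert e B" "insert e (insert m B) - {m} = insert e B" using e AB by auto
          then show ?thesis by (simp add: sh_def y_def sW_def insert_commute)
        qed
        also have "\<dots> = - sg \<omega> E m B * z (insert e B) g"
        proof -
          have eq: "sg \<omega> E m (insert e B) = - sg \<omega> E m B" using sg_m_insert[OF mx fin, of e B] e by blast
          show ?thesis by (simp only: eq mult_minus_left)
        qed
        finally show "sg \<omega> (E - {m}) e B * sh m y (insert e B) g =
            - sg \<omega> E m B * (sg \<omega> (E - {m}) e B * z (insert e B) g)" by simp
      qed
      also have "\<dots> = - sg \<omega> E m B * dd \<omega> (E - {m}) z B g"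
        by (simp add: dd_def sum_distrib_left)
      also have "\<dots> = z A g"
      proof -
        have "dd \<omega> E z B g = 0" using cyc[OF AB(2)] by simp
        then have "dd \<omega> (E - {m}) z B g = - (sg \<omega> E m B * z (insert m B) g)"
          using D1[OF lo fin m mx AB(2), of z g] by (simp add: eq_neg_iff_add_eq_0)
        then show ?thesis using AB by simp
      qed
      finally show ?thesis .
    qed
  qed
  ultimately show ?thesis by blast
qed

lemma dimW_insert:
  assumes fin: "finite S"
  shows "W.dim (insert x S) = (if x \<in> W.span S then W.dim S else Suc (W.dim S))"
proof (cases "x \<in> W.span S")
  case True then show ?thesis by (metis W.dim_span W.span_redundant)
next
  case False
  obtain B where B: "B \<subseteq> W.span S" "W.independent B" "W.span S \<subseteq> W.span B" "card B = W.dim (W.span S)"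
    using W.basis_exists [of "W.span S"] by blast
  have finB: "finite B" using W.independent_span_bound[OF fin B(2) B(1)] by simp
  have "W.dim (W.span (insert x S)) = Suc (W.dim S)"
  proof (rule W.dim_unique)
    show "insert x B \<subseteq> W.span (insert x S)"
      by (meson B(1) insertI1 insert_subset order_trans W.span_base W.span_mono subset_insertI)
    show "W.span (insert x S) \<subseteq> W.span (insert x B)"
      by (metis B(1) B(3) W.span_breakdown_eq W.span_subspace subsetI W.subspace_span)
    show "W.independent (insert x B)"
      by (metis B(1-3) W.independent_insert W.span_subspace W.subspace_span False)
    show "card (insert x B) = Suc (W.dim S)"
      using B False finB by (metis W.dim_span W.span_base card_insert_disjoint subset_iff)
  qed
  then show ?thesis by (metis False W.dim_span)
qed

definition rk :: "('g \<Rightarrow> 'k::field) set \<Rightarrow> ('s \<Rightarrow> 'g \<Rightarrow> 'k) \<Rightarrow> 's set \<Rightarrow> int" where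
  "rk X v E = int (W.dim (X \<union> v ` E)) - int (W.dim X)"

lemma CX_m0: "x \<in> CX Y v' (E - {m}) j \<Longrightarrow> m \<in> A \<Longrightarrow> x A = 0"
  by (rule CXD0) auto

lemma dd_m0: "x \<in> CX Y v' (E - {m}) j \<Longrightarrow> m \<in> B \<Longrightarrow> dd \<omega> (E - {m}) x B = 0"
  unfolding dd_def fun_eq_iff using CX_m0[of x Y v' E m j] by auto

lemma sh_CX0: "x \<in> CX Y v' (E - {m}) j \<Longrightarrow> sh m x = 0"
  unfolding sh_def fun_eq_iff using CX_m0[of x Y v' E m j] by auto

lemma embed:
  assumes lo: "linear_order_on D \<omega>" and fin: "finite E" and m: "m \<in> E" and mx: "\<forall>b\<in>E. (b, m) \<in> \<omega>"
    and u: "u \<in> CX Y v' (E - {m}) j"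
    and sub: "\<And>A. A \<subseteq> E - {m} \<Longrightarrow> W.span (Y \<union> v' ` (E - {m} - A)) \<subseteq> W.span (X \<union> v ` (E - A))"
  shows "u \<in> CX X v E j" "dd \<omega> E u = (\<lambda>A. if m \<in> A then 0 else dd \<omega> (E - {m}) u A)"
proof -
  show "u \<in> CX X v E j"
  proof (rule CXI)
    fix A assume A: "A \<subseteq> E" "card A = j"
    show "u A \<in> W.span (X \<union> v ` (E - A))"
    proof (cases "m \<in> A")
      case True then show ?thesis using CX_m0[OF u] W.span_zero by simp
    next
      case False
      then have A': "A \<subseteq> E - {m}" using A by auto
      then show ?thesis using CXD[OF u A' A(2)] sub[OF A'] by auto
    qed
  next
    fix A assume "\<not> (A \<subseteq> E \<and> card A = j)"
    then show "u A = 0" by (intro CXD0[OF u]) auto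
  qed
  show "dd \<omega> E u = (\<lambda>A. if m \<in> A then 0 else dd \<omega> (E - {m}) u A)"
  proof (rule ext)
    fix A show "dd \<omega> E u A = (if m \<in> A then 0 else dd \<omega> (E - {m}) u A)"
    proof (cases "m \<in> A")
      case True
      then have "A = insert m (A - {m})" "m \<notin> A - {m}" by auto
      then show ?thesis using D2[OF lo fin m mx, of "A - {m}" u] sh_CX0[OF u] True by simp
    next
      case False
      show ?thesis using D1[OF lo fin m mx False, of u] CX_m0[OF u, of "insert m A"] False
        by (simp add: fun_eq_iff)
    qed
  qed
qed

lemma restrict:
  assumes lo: "linear_order_on D \<omega>" and fin: "finite E" and m: "m \<in> E" and mx: "\<forall>b\<in>E. (b, m) \<in> \<omega>"
    and w: "w \<in> CX X v E i" and w0: "\<And>A. m \<in> A \<Longrightarrow> w A = 0"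
  shows "w \<in> CX (insert (v m) X) v (E - {m}) i" "dd \<omega> E w = 0 \<Longrightarrow> dd \<omega> (E - {m}) w = 0"
proof -
  show "w \<in> CX (insert (v m) X) v (E - {m}) i"
  proof (rule CXI)
    fix A assume A: "A \<subseteq> E - {m}" "card A = i"
    have "X \<union> v ` (E - A) = insert (v m) X \<union> v ` (E - {m} - A)" using A m by auto
    then show "w A \<in> W.span (insert (v m) X \<union> v ` (E - {m} - A))" using CXD[OF w, of A] A by auto
  next
    fix A assume A: "\<not> (A \<subseteq> E - {m} \<and> card A = i)"
    show "w A = 0"
    proof (cases "m \<in> A")
      case True then show ?thesis by (rule w0)
    next
      case False then show ?thesis using A by (intro CXD0[OF w]) auto
    qed
  qed
  assume d: "dd \<omega> E w = 0"
  show "dd \<omega> (E - {m}) w = 0"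
  proof (rule ext, rule ext)
    fix B g
    show "dd \<omega> (E - {m}) w B g = 0 B g"
    proof (cases "m \<in> B")
      case True
      then show ?thesis unfolding dd_def using w0 by simp
    next
      case False
      show ?thesis using D1[OF lo fin m mx False, of w g] d w0[of "insert m B"] by simp
    qed
  qed
qed

lemma shift:
  assumes lo: "linear_order_on D \<omega>" and fin: "finite E" and m: "m \<in> E" and mx: "\<forall>b\<in>E. (b, m) \<in> \<omega>"
    and z: "z \<in> CX X v E (Suc j)"
  shows "sh m z \<in> CX X v (E - {m}) j"
proof (rule CXI)
  fix B assume B: "B \<subseteq> E - {m}" "card B = j"
  have fB: "finite B" using B fin finite_subset by blast
  have "z (insert m B) \<in> W.span (X \<union> v ` (E - insert m B))"
    by (rule CXD[OF z]) (use B m fB in \<open>auto simp: card_insert_if\<close>)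
  moreover have "E - insert m B = E - {m} - B" by auto
  ultimately show "sh m z B \<in> W.span (X \<union> v ` (E - {m} - B))" using B by (auto simp: sh_def)
next
  fix B assume B: "\<not> (B \<subseteq> E - {m} \<and> card B = j)"
  show "sh m z B = 0"
  proof (cases "m \<in> B")
    case False
    have "z (insert m B) = 0"
    proof (rule CXD0[OF z])
      show "\<not> (insert m B \<subseteq> E \<and> card (insert m B) = Suc j)"
      proof
        assume h: "insert m B \<subseteq> E \<and> card (insert m B) = Suc j"
        then have "finite B" using fin finite_subset by auto
        with h B False show False by auto
      qed
    qed
    then show ?thesis by (simp add: sh_def)
  qed (simp add: sh_def)
qed

lemma shift_cyc:
  assumes lo: "linear_order_on D \<omega>" and fin: "finite E" and m: "m \<in> E" and mx: "\<forall>b\<in>E. (b, m) \<in> \<omega>"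
    and d: "dd \<omega> E z = 0"
  shows "dd \<omega> (E - {m}) (sh m z) = 0"
proof (rule ext)
  fix B show "dd \<omega> (E - {m}) (sh m z) B = 0 B"
  proof (cases "m \<in> B")
    case True then show ?thesis by (simp add: dd_def sh_def fun_eq_iff)
  next
    case False then show ?thesis using D2[OF lo fin m mx False, of z] d by simp
  qed
qed

lemma shift0:
  assumes fin: "finite E" and z: "z \<in> CX X v E 0"
  shows "sh m z = 0"
proof (rule ext)
  fix B show "sh m z B = 0 B"
  proof (cases "m \<in> B")
    case False
    have "z (insert m B) = 0"
      by (rule CXD0[OF z]) (use fin finite_subset in fastforce)
    then show ?thesis using False by (simp add: sh_def)
  qed (simp add: sh_def)
qed

definition lift :: "'s \<Rightarrow> ('s set \<Rightarrow> 'g \<Rightarrow> 'k::field) \<Rightarrow> ('s set \<Rightarrow> 'g \<Rightarrow> 'k)" where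
  "lift m y = (\<lambda>A. if m \<in> A then y (A - {m}) else 0)"

lemma lift:
  assumes lo: "linear_order_on D \<omega>" and fin: "finite E" and m: "m \<in> E" and mx: "\<forall>b\<in>E. (b, m) \<in> \<omega>"
    and y: "y \<in> CX X v (E - {m}) j"
  shows "lift m y \<in> CX X v E (Suc j)" "\<And>B. m \<notin> B \<Longrightarrow> dd \<omega> E (lift m y) (insert m B) = dd \<omega> (E - {m}) y B"
proof -
  show "lift m y \<in> CX X v E (Suc j)"
  proof (rule CXI)
    fix A assume A: "A \<subseteq> E" "card A = Suc j"
    show "lift m y A \<in> W.span (X \<union> v ` (E - A))"
    proof (cases "m \<in> A")
      case True
      have fA: "finite A" using A fin finite_subset by auto
      have "y (A - {m}) \<in> W.span (X \<union> v ` (E - {m} - (A - {m})))"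
        by (rule CXD[OF y]) (use A True fA in auto)
      moreover have "E - {m} - (A - {m}) = E - A" using True by auto
      ultimately show ?thesis using True by (simp add: lift_def)
    qed (simp add: lift_def W.span_zero)
  next
    fix A assume A: "\<not> (A \<subseteq> E \<and> card A = Suc j)"
    show "lift m y A = 0"
    proof (cases "m \<in> A")
      case True
      have "y (A - {m}) = 0"
      proof (rule CXD0[OF y])
        show "\<not> (A - {m} \<subseteq> E - {m} \<and> card (A - {m}) = j)"
        proof
          assume h: "A - {m} \<subseteq> E - {m} \<and> card (A - {m}) = j"
          then have "A \<subseteq> E" using m by auto
          moreover then have "finite A" using fin finite_subset by auto
          ultimately show False using h A True card_Suc_Diff1[of A m] by auto
        qed
      qed
      then show ?thesis using True by (simp add: lift_def)
    qed (simp add: lift_def)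
  qed
  have shl: "sh m (lift m y) = y"
  proof (rule ext)
    fix B show "sh m (lift m y) B = y B"
      using CX_m0[OF y, of B] by (cases "m \<in> B") (auto simp: sh_def lift_def)
  qed
  fix B assume "m \<notin> B"
  then show "dd \<omega> E (lift m y) (insert m B) = dd \<omega> (E - {m}) y B"
    using D2[OF lo fin m mx, of B "lift m y"] shl by simp
qed

lemma lift_out:
  assumes lo: "linear_order_on D \<omega>" and fin: "finite E" and m: "m \<in> E" and mx: "\<forall>b\<in>E. (b, m) \<in> \<omega>"
    and A: "m \<notin> A"
  shows "dd \<omega> E (lift m y) A g = sg \<omega> E m A * y A g"
proof -
  have "dd \<omega> (E - {m}) (lift m y) A g = 0"
    unfolding dd_def by (rule sum.neutral) (use A in \<open>auto simp: lift_def\<close>)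
  moreover have "insert m A - {m} = A" using A by auto
  ultimately show ?thesis using D1[OF lo fin m mx A, of "lift m y" g] by (simp add: lift_def)
qed

lemma exact_main:
  assumes lo: "linear_order_on D \<omega>"
  shows "finite E \<Longrightarrow> E \<subseteq> D \<Longrightarrow> E \<noteq> {} \<Longrightarrow> finite X \<Longrightarrow> int i \<noteq> int (card E) - rk X v E \<Longrightarrow>
    z \<in> CX X v E i \<Longrightarrow> dd \<omega> E z = 0 \<Longrightarrow> \<exists>y\<in>CX X v E (Suc i). dd \<omega> E y = z"
proof (induction "card E" arbitrary: E X z i rule: less_induct)
  case less
  note fin = less(2) and ED = less(3) and ne = less(4) and finX = less(5) and ii = less(6)
    and z = less(7) and zc = less(8)
  obtain m where m: "m \<in> E" and mx: "\<forall>b\<in>E. (b, m) \<in> \<omega>" using lo_max[OF lo fin ne ED] by blast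
  define E' where "E' = E - {m}"
  have cyc: "\<And>B. m \<notin> B \<Longrightarrow> dd \<omega> E z B = 0" using zc by simp
  have EE': "E = insert m E'" using m E'_def by auto
  have finE': "finite E'" using fin E'_def by auto
  have cardE: "card E = Suc (card E')" using card_Suc_Diff1[OF fin m] E'_def by simp
  have E'D: "E' \<subseteq> D" using ED E'_def by auto
  consider (loop) "v m \<in> W.span X" | (coloop) "v m \<notin> W.span (X \<union> v ` E')"
    | (mid) "v m \<notin> W.span X" "v m \<in> W.span (X \<union> v ` E')" by blast
  then show ?case
  proof cases
    case loop
    show ?thesis
    proof (rule cone[OF lo fin m mx z cyc])
      fix A assume A: "A \<subseteq> E - {m}" "card A = i"
      have "z A \<in> W.span (X \<union> v ` (E - A))" using CXD[OF z, of A] A by auto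
      moreover have "X \<union> v ` (E - A) = insert (v m) (X \<union> v ` (E - {m} - A))" using A m by auto
      moreover have "v m \<in> W.span (X \<union> v ` (E - {m} - A))"
        using loop W.span_mono[of X "X \<union> v ` (E - {m} - A)"] by auto
      ultimately show "z A \<in> W.span (X \<union> v ` (E - {m} - A))" by (simp add: W.span_redundant)
    qed
  next
    case coloop
    show ?thesis
    proof (cases "E' = {}")
      case True
      have "W.dim (X \<union> v ` E) = Suc (W.dim X)"
        using dimW_insert[OF finX, of "v m"] coloop True EE' by simp
      then have "rk X v E = 1" by (simp add: rk_def)
      moreover have "card E = 1" using cardE True by simp
      ultimately have i0: "i \<noteq> 0" using ii by simp
      show ?thesis
      proof (rule cone[OF lo fin m mx z cyc])
        fix A assume A: "A \<subseteq> E - {m}" "card A = i"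
        then have "A = {}" using True E'_def by auto
        then show "z A \<in> W.span (X \<union> v ` (E - {m} - A))" using i0 A by simp
      qed
    next
      case False
      define P where "P = X \<union> v ` E'"
      have zP: "z A \<in> W.span P" if "m \<in> A" for A
      proof (cases "A \<subseteq> E \<and> card A = i")
        case True
        then have "z A \<in> W.span (X \<union> v ` (E - A))" using CXD[OF z] by auto
        moreover have "W.span (X \<union> v ` (E - A)) \<subseteq> W.span P"
          by (rule W.span_mono) (use that in \<open>auto simp: P_def E'_def\<close>)
        ultimately show ?thesis by auto
      next
        case False then show ?thesis using CXD0[OF z] W.span_zero by simp
      qed
      have ex: "\<exists>k. z A - sW k (v m) \<in> W.span (X \<union> v ` (E' - A))" if A: "A \<subseteq> E'" "card A = i" for A
      proof -
        have "z A \<in> W.span (X \<union> v ` (E - A))" using CXD[OF z] A E'_def by auto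
        moreover have "X \<union> v ` (E - A) = insert (v m) (X \<union> v ` (E' - A))" using A m E'_def by auto
        ultimately show ?thesis using W.span_breakdown_eq[of "z A" "v m" "X \<union> v ` (E' - A)"] by simp
      qed
      define lam where "lam A = (if A \<subseteq> E' \<and> card A = i
          then (SOME k. z A - sW k (v m) \<in> W.span (X \<union> v ` (E' - A))) else 0)" for A
      have lamP: "z A - sW (lam A) (v m) \<in> W.span (X \<union> v ` (E' - A))" if "A \<subseteq> E'" "card A = i" for A
        using someI_ex[OF ex[OF that]] that by (simp add: lam_def)
      define zl where "zl A = sW (lam A) (v m)" for A
      have zlP: "z A - zl A \<in> W.span P" for A
      proof (cases "A \<subseteq> E' \<and> card A = i")
        case True
        then have "z A - zl A \<in> W.span (X \<union> v ` (E' - A))" using lamP by (simp add: zl_def)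
        moreover have "W.span (X \<union> v ` (E' - A)) \<subseteq> W.span P" by (rule W.span_mono) (auto simp: P_def)
        ultimately show ?thesis by auto
      next
        case False
        then have zl0: "zl A = 0" by (auto simp: zl_def lam_def sW_def fun_eq_iff)
        show ?thesis
        proof (cases "m \<in> A")
          case True then show ?thesis using zP zl0 by simp
        next
          case mA: False
          then have "\<not> (A \<subseteq> E \<and> card A = i)" using False E'_def by auto
          then show ?thesis using CXD0[OF z] zl0 W.span_zero by simp
        qed
      qed
      have zlC: "zl \<in> CX {v m} (\<lambda>_. 0) E' i"
      proof (rule CXI)
        fix A show "zl A \<in> W.span ({v m} \<union> (\<lambda>_. 0) ` (E' - A))"
          by (simp add: zl_def W.span_scale W.span_base)
      next
        fix A assume "\<not> (A \<subseteq> E' \<and> card A = i)"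
        then show "zl A = 0" by (auto simp: zl_def lam_def sW_def fun_eq_iff)
      qed
      have ddvec: "dd \<omega> E' zl B = sW (\<Sum>e\<in>E' - B. sg \<omega> E' e B * lam (insert e B)) (v m)" for B
        by (simp add: dd_def zl_def sW_def fun_eq_iff sum_distrib_right mult.assoc)
      have zlcyc: "dd \<omega> E' zl = 0"
      proof (rule ext)
        fix B
        show "dd \<omega> E' zl B = 0 B"
        proof (cases "m \<in> B")
          case True
          have "lam (insert e B) = 0" for e using True E'_def by (auto simp: lam_def)
          then show ?thesis using ddvec[of B] by (simp add: sW_def fun_eq_iff)
        next
          case False
          have a: "dd \<omega> E' z B \<in> W.span P"
          proof -
            have "dd \<omega> E z B g = dd \<omega> E' z B g + sg \<omega> E m B * z (insert m B) g" for g
              using D1[OF lo fin m mx False, of z g] E'_def by simp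
            then have "dd \<omega> E' z B = - sW (sg \<omega> E m B) (z (insert m B))"
              using cyc[OF False] by (simp add: fun_eq_iff sW_def eq_neg_iff_add_eq_0)
            then show ?thesis using zP[of "insert m B"] by (simp add: W.span_neg W.span_scale)
          qed
          have b: "dd \<omega> E' (\<lambda>A. z A - zl A) B \<in> W.span P"
            unfolding dd_vec by (rule W.span_sum, rule W.span_scale, rule zlP)
          have eq: "dd \<omega> E' (\<lambda>A. z A - zl A) B = dd \<omega> E' z B - dd \<omega> E' zl B"
            using fun_cong[OF dd_diff[of \<omega> E' z zl], of B] by (simp add: fun_diff_def)
          have "dd \<omega> E' z B - dd \<omega> E' (\<lambda>A. z A - zl A) B \<in> W.span P" by (rule W.span_diff[OF a b])
          moreover have "dd \<omega> E' z B - dd \<omega> E' (\<lambda>A. z A - zl A) B = dd \<omega> E' zl B"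
            unfolding eq by simp
          ultimately have "dd \<omega> E' zl B \<in> W.span P" by simp
          then have "sW (\<Sum>e\<in>E' - B. sg \<omega> E' e B * lam (insert e B)) (v m) \<in> W.span P"
            using ddvec by simp
          then have "(\<Sum>e\<in>E' - B. sg \<omega> E' e B * lam (insert e B)) = 0"
          proof (rule contrapos_pp)
            define c where "c = (\<Sum>e\<in>E' - B. sg \<omega> E' e B * lam (insert e B))"
            assume c: "(\<Sum>e\<in>E' - B. sg \<omega> E' e B * lam (insert e B)) \<noteq> 0"
            then have c0: "c \<noteq> 0" by (simp add: c_def)
            have "v m = sW (inverse c) (sW c (v m))" using c0 by (simp add: sW_def fun_eq_iff)
            moreover have "v m \<notin> W.span P" using coloop by (simp add: P_def)
            ultimately have "sW c (v m) \<notin> W.span P" by (metis W.span_scale)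
            then show "sW (\<Sum>e\<in>E' - B. sg \<omega> E' e B * lam (insert e B)) (v m) \<notin> W.span P"
              by (simp add: c_def)
          qed
          then show ?thesis using ddvec[of B] by (simp add: sW_def fun_eq_iff)
        qed
      qed
      obtain m' where m': "m' \<in> E'" "\<forall>b\<in>E'. (b, m') \<in> \<omega>" using lo_max[OF lo finE' False E'D] by blast
      obtain mu where mu: "mu \<in> CX {v m} (\<lambda>_. 0) E' (Suc i)" "dd \<omega> E' mu = zl"
      proof -
        have "\<exists>y\<in>CX {v m} (\<lambda>_. 0) E' (Suc i). dd \<omega> E' y = zl"
        proof (rule cone[OF lo finE' m' zlC])
          show "dd \<omega> E' zl B = 0" for B using zlcyc by simp
          show "zl A \<in> W.span ({v m} \<union> (\<lambda>_. 0) ` (E' - {m'} - A))" for A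
            by (simp add: zl_def W.span_scale W.span_base)
        qed
        then show ?thesis using that by blast
      qed
      have sub1: "W.span ({v m} \<union> (\<lambda>_. 0) ` (E - {m} - A)) \<subseteq> W.span (X \<union> v ` (E - A))"
        if "A \<subseteq> E - {m}" for A
      proof (rule W.span_minimal)
        show "{v m} \<union> (\<lambda>_. 0) ` (E - {m} - A) \<subseteq> W.span (X \<union> v ` (E - A))"
          using that m by (auto intro: W.span_base W.span_zero)
      qed simp
      have mu': "mu \<in> CX {v m} (\<lambda>_. 0) (E - {m}) (Suc i)" using mu(1) E'_def by simp
      note emb = embed[OF lo fin m mx mu' sub1]
      have mu2: "dd \<omega> (E - {m}) mu = zl" using mu(2) E'_def by simp
      have ddmu: "dd \<omega> E mu = (\<lambda>A. if m \<in> A then 0 else zl A)" 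
      proof (rule ext)
        fix A show "dd \<omega> E mu A = (if m \<in> A then 0 else zl A)"
          using fun_cong[OF emb(2), of A] fun_cong[OF mu2, of A] by simp
      qed
      define z' where "z' = z - dd \<omega> E mu"
      have z'C: "z' \<in> CX X v E i" unfolding z'_def by (rule CX_diff[OF z dd_mem[OF fin emb(1)]])
      have z'c: "dd \<omega> E z' = 0" unfolding z'_def dd_diff using zc dd_dd[OF lo ED fin] by simp
      obtain y' where y': "y' \<in> CX X v E (Suc i)" "dd \<omega> E y' = z'"
      proof -
        have "\<exists>y\<in>CX X v E (Suc i). dd \<omega> E y = z'"
        proof (rule cone[OF lo fin m mx z'C])
          show "dd \<omega> E z' B = 0" for B using z'c by simp
          fix A assume A: "A \<subseteq> E - {m}" "card A = i"
          then have "z' A = z A - zl A" using ddmu by (auto simp: z'_def)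
          then show "z' A \<in> W.span (X \<union> v ` (E - {m} - A))"
            using lamP[of A] A E'_def by (simp add: zl_def)
        qed
        then show ?thesis using that by blast
      qed
      show ?thesis
      proof (rule bexI[of _ "y' + mu"])
        show "y' + mu \<in> CX X v E (Suc i)" by (rule CX_add[OF y'(1) emb(1)])
        show "dd \<omega> E (y' + mu) = z" using y'(2) by (simp add: dd_add z'_def)
      qed
    qed
  next
    case mid
    have E'ne: "E' \<noteq> {}" using mid by auto
    have finXE: "finite (X \<union> v ` E')" using finX finE' by simp
    have d1: "W.dim (X \<union> v ` E) = W.dim (X \<union> v ` E')"
      using dimW_insert[OF finXE, of "v m"] mid EE' by simp
    have d2: "W.dim (insert (v m) X) = Suc (W.dim X)" using dimW_insert[OF finX, of "v m"] mid by simp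
    have d3: "insert (v m) X \<union> v ` E' = insert (v m) (X \<union> v ` E')" by auto
    have d4: "W.dim (insert (v m) (X \<union> v ` E')) = W.dim (X \<union> v ` E')"
      using dimW_insert[OF finXE, of "v m"] mid by simp
    have rk1: "rk X v E' = rk X v E" using d1 by (simp add: rk_def)
    have rk2: "rk (insert (v m) X) v E' = rk X v E - 1" using d1 d2 d3 d4 by (simp add: rk_def)
    have lessE: "card E' < card E" using cardE by simp
    note IH = less(1)[OF lessE finE' E'D E'ne]
    obtain y1 where y1: "y1 \<in> CX X v E' i" "dd \<omega> E' y1 = sh m z"
    proof (cases i)
      case 0
      then have "sh m z = 0" using shift0[OF fin] z by simp
      then show ?thesis using that[of 0] by simp
    next
      case (Suc j)
      have zS: "z \<in> CX X v E (Suc j)" using z Suc by simp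
      have "sh m z \<in> CX X v E' j" using shift[OF lo fin m mx zS] E'_def by simp
      moreover have "dd \<omega> E' (sh m z) = 0" using shift_cyc[OF lo fin m mx zc] E'_def by simp
      moreover have "int j \<noteq> int (card E') - rk X v E'" using ii Suc cardE rk1 by simp
      ultimately show ?thesis using IH[OF finX] that Suc by blast
    qed
    have y1': "y1 \<in> CX X v (E - {m}) i" using y1(1) E'_def by simp
    note L = lift[OF lo fin m mx y1']
    define w where "w = z - dd \<omega> E (lift m y1)"
    have wC: "w \<in> CX X v E i" unfolding w_def by (rule CX_diff[OF z dd_mem[OF fin L(1)]])
    have wc: "dd \<omega> E w = 0" unfolding w_def dd_diff using zc dd_dd[OF lo ED fin] by simp
    have w0: "w A = 0" if "m \<in> A" for A
    proof -
      have A: "A = insert m (A - {m})" "m \<notin> A - {m}" using that by auto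
      have "dd \<omega> E (lift m y1) A = sh m z (A - {m})" using L(2)[OF A(2)] A(1) y1(2) E'_def by simp
      also have "\<dots> = z A" using A by (simp add: sh_def)
      finally show ?thesis by (simp add: w_def)
    qed
    have w0': "\<And>A. m \<in> A \<Longrightarrow> w A = 0" using w0 by blast
    have R1: "w \<in> CX (insert (v m) X) v E' i" using restrict(1)[OF lo fin m mx wC w0'] E'_def by simp
    have R2: "dd \<omega> E' w = 0" using restrict(2)[OF lo fin m mx wC w0' wc] E'_def by simp
    obtain u where u: "u \<in> CX (insert (v m) X) v E' (Suc i)" "dd \<omega> E' u = w"
    proof -
      have "int i \<noteq> int (card E') - rk (insert (v m) X) v E'" using ii cardE rk2 by simp
      then show ?thesis using IH[OF _ _ R1 R2] finX that by blast
    qed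
    have sub2: "W.span (insert (v m) X \<union> v ` (E - {m} - A)) \<subseteq> W.span (X \<union> v ` (E - A))"
      if "A \<subseteq> E - {m}" for A
      by (rule W.span_mono) (use that m in auto)
    have u': "u \<in> CX (insert (v m) X) v (E - {m}) (Suc i)" using u(1) E'_def by simp
    note emb = embed[OF lo fin m mx u' sub2]
    have ddu: "dd \<omega> E u = w"
    proof (rule ext)
      fix A show "dd \<omega> E u A = w A"
        using emb(2) u(2) w0 E'_def by (cases "m \<in> A") auto
    qed
    show ?thesis
    proof (rule bexI[of _ "lift m y1 + u"])
      show "lift m y1 + u \<in> CX X v E (Suc i)" by (rule CX_add[OF L(1) emb(1)])
      show "dd \<omega> E (lift m y1 + u) = z" using ddu by (simp add: dd_add w_def)
    qed
  qed
qed

interpretation WC: vector_space_pair "sW :: 'k::field \<Rightarrow> ('g \<Rightarrow> 'k) \<Rightarrow> _" "sC :: 'k \<Rightarrow> ('s set \<Rightarrow> 'g \<Rightarrow> 'k) \<Rightarrow> _" ..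

definition DS :: "'s set set \<Rightarrow> ('s set \<Rightarrow> ('g \<Rightarrow> 'k::field) set) \<Rightarrow> ('s set \<Rightarrow> 'g \<Rightarrow> 'k) set" where
  "DS I G = {x. \<forall>A. (A \<in> I \<longrightarrow> x A \<in> W.span (G A)) \<and> (A \<notin> I \<longrightarrow> x A = 0)}"

definition del :: "'s set \<Rightarrow> ('g \<Rightarrow> 'k::field) \<Rightarrow> ('s set \<Rightarrow> 'g \<Rightarrow> 'k)" where
  "del A w = (\<lambda>B. if B = A then w else 0)"

lemma del_linear: "Vector_Spaces.linear sW sC (del A)"
  unfolding Vector_Spaces.linear_iff
  by (auto simp: W.vector_space_axioms C.vector_space_axioms del_def sC_def sW_def fun_eq_iff)

lemma ev_linear: "Vector_Spaces.linear sC sW (\<lambda>x. x A)"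
  unfolding Vector_Spaces.linear_iff
  by (auto simp: W.vector_space_axioms C.vector_space_axioms sC_def sW_def fun_eq_iff)

lemma DS_subspace: "C.subspace (DS I G)"
  unfolding C.subspace_def
  by (auto simp: DS_def sC_app W.span_add W.span_scale W.span_zero)

lemma DS_span:
  assumes fin: "finite I"
  shows "DS I G \<subseteq> C.span (\<Union>A\<in>I. del A ` G A)"
proof
  fix x assume x: "x \<in> DS I G"
  have xs: "x = (\<Sum>A\<in>I. del A (x A))"
  proof (rule ext)
    fix B
    have "(\<Sum>A\<in>I. del A (x A)) B = (\<Sum>A\<in>I. if B = A then x A else 0)"
      by (simp add: sum_fun_app del_def)
    also have "\<dots> = (if B \<in> I then x B else 0)" using fin by (simp add: sum.delta)
    also have "\<dots> = x B" using x by (auto simp: DS_def)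
    finally show "x B = (\<Sum>A\<in>I. del A (x A)) B" by simp
  qed
  have "(\<Sum>A\<in>I. del A (x A)) \<in> C.span (\<Union>A\<in>I. del A ` G A)"
  proof (rule C.span_sum)
    fix A assume A: "A \<in> I"
    have "x A \<in> W.span (G A)" using x A by (auto simp: DS_def)
    then have "del A (x A) \<in> del A ` W.span (G A)" by auto
    also have "\<dots> = C.span (del A ` G A)" using WC.linear_span_image[OF del_linear, of A "G A"] by simp
    also have "\<dots> \<subseteq> C.span (\<Union>A\<in>I. del A ` G A)" by (rule C.span_mono) (use A in auto)
    finally show "del A (x A) \<in> C.span (\<Union>A\<in>I. del A ` G A)" .
  qed
  then show "x \<in> C.span (\<Union>A\<in>I. del A ` G A)" using xs by simp
qed

lemma C_dim_zero: "C.dim {0} = 0"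
  by (rule C.dim_unique[of "{}"]) (auto simp: C.span_zero C.independent_empty)

lemma DS_dim:
  assumes "finite I" "\<forall>A\<in>I. finite (G A)"
  shows "C.dim (DS I G) = (\<Sum>A\<in>I. W.dim (G A))"
  using assms
proof (induction I rule: finite_induct)
  case empty
  have "DS {} G = {0}" by (auto simp: DS_def fun_eq_iff)
  then show ?case using C_dim_zero by simp
next
  case (insert A0 I)
  let ?V = "DS (insert A0 I) G"
  have finF: "finite (\<Union>A\<in>insert A0 I. del A ` G A)" using insert by auto
  have rn: "C.dim ?V = C.dim {x\<in>?V. x A0 = 0} + W.dim ((\<lambda>x. x A0) ` ?V)"
    by (rule CW.rank_nullity_fin[OF ev_linear DS_subspace finF DS_span]) (use insert in simp)
  have "{x\<in>?V. x A0 = 0} = DS I G" using insert by (auto simp: DS_def W.span_zero)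
  moreover have "(\<lambda>x. x A0) ` ?V = W.span (G A0)"
  proof
    show "(\<lambda>x. x A0) ` ?V \<subseteq> W.span (G A0)" by (auto simp: DS_def)
    show "W.span (G A0) \<subseteq> (\<lambda>x. x A0) ` ?V"
    proof
      fix w assume w: "w \<in> W.span (G A0)"
      have "del A0 w \<in> ?V" using w by (auto simp: DS_def del_def W.span_zero)
      then show "w \<in> (\<lambda>x. x A0) ` ?V" by (intro image_eqI[where x="del A0 w"]) (auto simp: del_def)
    qed
  qed
  ultimately show ?case using rn insert by simp
qed

lemma CX_DS: "CX X v E i = DS {A. A \<subseteq> E \<and> card A = i} (\<lambda>A. X \<union> v ` (E - A))"
  by (auto simp: CX_def DS_def)

lemma CX_dim:
  assumes "finite E" "finite X"
  shows "C.dim (CX X v E i) = (\<Sum>A\<in>{A. A \<subseteq> E \<and> card A = i}. W.dim (X \<union> v ` (E - A)))"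
  unfolding CX_DS using assms by (intro DS_dim) auto

lemma CX_fin:
  assumes "finite E" "finite X"
  shows "\<exists>F. finite F \<and> CX X v E i \<subseteq> C.span F"
proof -
  let ?F = "\<Union>A\<in>{A. A \<subseteq> E \<and> card A = i}. del A ` (X \<union> v ` (E - A))"
  have "finite ?F" using assms by auto
  moreover have "CX X v E i \<subseteq> C.span ?F" unfolding CX_DS by (rule DS_span) (use assms in auto)
  ultimately show ?thesis by blast
qed

lemma sorted_ex:
  assumes lo: "linear_order_on D \<omega>"
  shows "finite B \<Longrightarrow> B \<subseteq> D \<Longrightarrow> \<exists>xs. set xs = B \<and> distinct xs \<and> sorted_wrt (\<lambda>x y. (x, y) \<in> \<omega>) xs"
proof (induction "card B" arbitrary: B rule: less_induct)
  case less
  show ?case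
  proof (cases "B = {}")
    case True then show ?thesis by (intro exI[of _ "[]"]) simp
  next
    case False
    obtain b where b: "b \<in> B" "\<forall>c\<in>B. (b, c) \<in> \<omega>" using lo_min[OF lo less(2) False less(3)] by blast
    have "card (B - {b}) < card B" using card_Diff1_less[OF less(2) b(1)] .
    then obtain xs where xs: "set xs = B - {b}" "distinct xs" "sorted_wrt (\<lambda>x y. (x, y) \<in> \<omega>) xs"
      using less(1)[of "B - {b}"] less(2,3) by auto
    show ?thesis
      by (intro exI[of _ "b # xs"]) (use xs b in auto)
  qed
qed

lemma sorted_uniq:
  assumes lo: "linear_order_on D \<omega>"
  shows "set xs = set ys \<Longrightarrow> distinct xs \<Longrightarrow> distinct ys \<Longrightarrow> sorted_wrt (\<lambda>x y. (x, y) \<in> \<omega>) xs \<Longrightarrow>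
    sorted_wrt (\<lambda>x y. (x, y) \<in> \<omega>) ys \<Longrightarrow> xs = ys"
proof (induction xs arbitrary: ys)
  case Nil then show ?case by simp
next
  case (Cons a as)
  then obtain b bs where ys: "ys = b # bs" by (cases ys) auto
  have ab1: "a = b \<or> (b, a) \<in> \<omega>" using Cons.prems ys by (metis set_ConsD sorted_wrt.simps(2) list.set_intros(1))
  have ab2: "a = b \<or> (a, b) \<in> \<omega>" using Cons.prems ys by (metis set_ConsD sorted_wrt.simps(2) list.set_intros(1))
  have ab: "a = b" using ab1 ab2 lo_antisym[OF lo, of a b] by auto
  have "set as = set bs" using Cons.prems ys ab by auto
  then have "as = bs" using Cons ys by auto
  then show ?case using ab ys by simp
qed

lemma inc_seq_props:
  assumes lo: "linear_order_on D \<omega>" and fin: "finite B" and BD: "B \<subseteq> D"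
  shows "set (inc_seq \<omega> B) = B \<and> distinct (inc_seq \<omega> B) \<and> sorted_wrt (\<lambda>x y. (x, y) \<in> \<omega>) (inc_seq \<omega> B)"
proof -
  have "\<exists>!xs. set xs = B \<and> distinct xs \<and> sorted_wrt (\<lambda>x y. (x, y) \<in> \<omega>) xs"
    using sorted_ex[OF lo fin BD] sorted_uniq[OF lo] by metis
  then show ?thesis unfolding inc_seq_def by (rule theI')
qed

lemma inversions_cons:
  assumes lo: "linear_order_on D \<omega>" and xs: "distinct xs" "sorted_wrt (\<lambda>x y. (x, y) \<in> \<omega>) xs"
    and e: "e \<notin> set xs"
  shows "inversions \<omega> (e # xs) = card {b \<in> set xs. (b, e) \<in> \<omega>}"
proof -
  let ?S = "{(i, j). i < j \<and> j < length (e # xs) \<and> ((e # xs) ! j, (e # xs) ! i) \<in> \<omega> \<and> (e # xs) ! i \<noteq> (e # xs) ! j}"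
  let ?J = "{j. j < length xs \<and> (xs ! j, e) \<in> \<omega>}"
  have S: "?S = (\<lambda>j. (0, Suc j)) ` ?J"
  proof
    show "?S \<subseteq> (\<lambda>j. (0, Suc j)) ` ?J"
    proof
      fix p assume p: "p \<in> ?S"
      obtain i j where pij: "p = (i, j)" by fastforce
      have ij: "i < j" "j < Suc (length xs)" "((e # xs) ! j, (e # xs) ! i) \<in> \<omega>" "(e # xs) ! i \<noteq> (e # xs) ! j"
        using p pij by auto
      obtain j' where j': "j = Suc j'" using ij(1) by (cases j) auto
      show "p \<in> (\<lambda>j. (0, Suc j)) ` ?J"
      proof (cases i)
        case 0
        then show ?thesis using ij j' pij by auto
      next
        case (Suc i')
        have "i' < j'" "j' < length xs" using ij j' Suc by auto
        then have "(xs ! i', xs ! j') \<in> \<omega>" using sorted_wrt_nth_less[OF xs(2)] by blast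
        moreover have "(xs ! j', xs ! i') \<in> \<omega>" "xs ! i' \<noteq> xs ! j'" using ij j' Suc by auto
        ultimately show ?thesis using lo_antisym[OF lo] by blast
      qed
    qed
    show "(\<lambda>j. (0, Suc j)) ` ?J \<subseteq> ?S"
    proof
      fix p :: "nat \<times> nat" assume "p \<in> (\<lambda>j. (0, Suc j)) ` ?J"
      then obtain j where j: "p = (0, Suc j)" "j < length xs" "(xs ! j, e) \<in> \<omega>" by auto
      have "e \<noteq> xs ! j" using e j(2) nth_mem by metis
      then show "p \<in> ?S" using j by auto
    qed
  qed
  have "card ?S = card ?J" unfolding S by (rule card_image) (auto simp: inj_on_def)
  also have "card ?J = card (nth xs ` ?J)" by (rule card_image[symmetric], rule inj_on_nth) (use xs in auto)
  also have "nth xs ` ?J = {b \<in> set xs. (b, e) \<in> \<omega>}" by (auto simp: in_set_conv_nth)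
  finally show ?thesis by (simp add: inversions_def)
qed

lemma sort_sign_eq:
  assumes lo: "linear_order_on D \<omega>" and fin: "finite B" and BD: "B \<subseteq> D" and e: "e \<notin> B"
  shows "sort_sign \<omega> (e # inc_seq \<omega> B) = (-1) ^ card {b \<in> B. (b, e) \<in> \<omega>}"
  using inc_seq_props[OF lo fin BD] inversions_cons[OF lo] e by (simp add: sort_sign_def)

lemma cpx_d_dd:
  assumes lo: "linear_order_on D \<omega>" and fin: "finite E" and ED: "E \<subseteq> D"
  shows "cpx_d \<omega> E = (dd \<omega> E :: ('s set \<Rightarrow> 'g \<Rightarrow> 'k::field) \<Rightarrow> _)"
proof (intro ext)
  fix x :: "'s set \<Rightarrow> 'g \<Rightarrow> 'k" and A g
  show "cpx_d \<omega> E x A g = dd \<omega> E x A g"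
    unfolding cpx_d_def dd_def
  proof (rule sum.cong[OF refl])
    fix e assume e: "e \<in> E - A"
    have "(sort_sign \<omega> (e # inc_seq \<omega> (E - insert e A)) :: 'k) = (-1) ^ card {b \<in> E - insert e A. (b, e) \<in> \<omega>}"
      by (rule sort_sign_eq[OF lo]) (use fin ED in auto)
    then show "sort_sign \<omega> (e # inc_seq \<omega> (E - insert e A)) * x (insert e A) g =
        sg \<omega> E e A * x (insert e A) g" by (simp add: sg_def)
  qed
qed

lemma rk_bounds:
  assumes "finite X"
  shows "finite E \<Longrightarrow> 0 \<le> rk X v E \<and> rk X v E \<le> int (card E)"
proof (induction E rule: finite_induct)
  case empty then show ?case by (simp add: rk_def)
next
  case (insert a F)
  have fin: "finite (X \<union> v ` F)" using assms insert by simp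
  have "X \<union> v ` insert a F = insert (v a) (X \<union> v ` F)" by auto
  then have "W.dim (X \<union> v ` insert a F) = W.dim (X \<union> v ` F) \<or>
      W.dim (X \<union> v ` insert a F) = Suc (W.dim (X \<union> v ` F))"
    using dimW_insert[OF fin, of "v a"] by auto
  then show ?case using insert by (auto simp: rk_def)
qed

lemma altsum_pow:
  assumes fin: "finite E" and ne: "E \<noteq> {}"
  shows "(\<Sum>J\<in>Pow E. (-1::int) ^ card J) = 0"
proof -
  obtain a where a: "a \<in> E" using ne by auto
  define F where "F = E - {a}"
  have E: "E = insert a F" and aF: "a \<notin> F" and finF: "finite F" using a fin by (auto simp: F_def)
  have disj: "Pow F \<inter> insert a ` Pow F = {}" using aF by auto
  have inj: "inj_on (insert a) (Pow F)"
  proof (rule inj_onI)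
    fix J1 J2 assume "J1 \<in> Pow F" "J2 \<in> Pow F" "insert a J1 = insert a J2"
    moreover then have "a \<notin> J1" "a \<notin> J2" using aF by auto
    ultimately show "J1 = J2" using insert_ident by metis
  qed
  have "(\<Sum>J\<in>Pow E. (-1::int) ^ card J) = (\<Sum>J\<in>Pow F. (-1::int) ^ card J) + (\<Sum>J\<in>insert a ` Pow F. (-1::int) ^ card J)"
    unfolding E Pow_insert by (rule sum.union_disjoint) (use finF disj in auto)
  also have "(\<Sum>J\<in>insert a ` Pow F. (-1::int) ^ card J) = (\<Sum>J\<in>Pow F. (-1::int) ^ card (insert a J))"
    by (rule sum.reindex[OF inj, unfolded comp_def])
  also have "\<dots> = (\<Sum>J\<in>Pow F. - ((-1::int) ^ card J))"
  proof (rule sum.cong[OF refl])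
    fix J assume J: "J \<in> Pow F"
    then have "finite J" "a \<notin> J" using finF aF finite_subset by auto
    then show "(-1::int) ^ card (insert a J) = - ((-1) ^ card J)" by simp
  qed
  finally show ?thesis by (simp add: sum_negf)
qed

lemma telescope: "(\<Sum>i\<le>n. (-1::int) ^ i * (b i + b (Suc i))) = b 0 + (-1) ^ n * b (Suc n)"
  by (induction n) (auto simp: algebra_simps)

lemma neg1_diff: "k \<le> n \<Longrightarrow> (-1::int) ^ (n - k) = (-1) ^ n * (-1) ^ k"
proof -
  assume "k \<le> n"
  then have "(-1::int) ^ n = (-1) ^ (n - k) * (-1) ^ k" by (simp flip: power_add)
  then have "(-1::int) ^ n * (-1) ^ k = (-1) ^ (n - k) * ((-1) ^ k * (-1) ^ k)" by simp
  then show ?thesis by simp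
qed

lemma homology_main:
  assumes lo: "linear_order_on E \<omega>" and fin: "finite E" and ne: "E \<noteq> {}" and finX: "finite X"
  shows "int (C.dim {x \<in> CX X v E i. dd \<omega> E x = 0}) - int (C.dim (dd \<omega> E ` CX X v E (Suc i))) =
    (if int i = int (card E) - rk X v E
     then (-1) ^ nat (rk X v E) * (\<Sum>J\<in>Pow E. (-1) ^ card J * rk X v J) else 0)"
proof -
  define n where "n = card E"
  define r where "r = rk X v E"
  have r0: "0 \<le> r" and rn: "r \<le> int n" using rk_bounds[OF finX fin, of v] by (auto simp: r_def n_def)
  define p where "p = n - nat r"
  have pn: "p \<le> n" and ip: "\<And>i. int i = int n - r \<longleftrightarrow> i = p" and np: "n = p + nat r"
    using r0 rn by (auto simp: p_def)
  define c where "c i = C.dim (CX X v E i)" for i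
  define z where "z i = C.dim {x \<in> CX X v E i. dd \<omega> E x = 0}" for i
  define b where "b i = C.dim (dd \<omega> E ` CX X v E i)" for i
  define h where "h i = int (z i) - int (b (Suc i))" for i
  have cz: "c i = z i + b i" for i
  proof -
    obtain F where F: "finite F" "CX X v E i \<subseteq> C.span F" using CX_fin[OF fin finX] by blast
    show ?thesis unfolding c_def z_def b_def
      by (rule CC.rank_nullity_fin[OF dd_linear CX_subspace F])
  qed
  have ex: "z i = b (Suc i)" if "i \<noteq> p" for i
  proof -
    have "{x \<in> CX X v E i. dd \<omega> E x = 0} = dd \<omega> E ` CX X v E (Suc i)"
    proof
      show "{x \<in> CX X v E i. dd \<omega> E x = 0} \<subseteq> dd \<omega> E ` CX X v E (Suc i)"
      proof
        fix x assume x: "x \<in> {x \<in> CX X v E i. dd \<omega> E x = 0}"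
        have "int i \<noteq> int (card E) - rk X v E" using ip that by (simp add: n_def r_def)
        then obtain y where "y \<in> CX X v E (Suc i)" "dd \<omega> E y = x"
          using exact_main[OF lo fin subset_refl ne finX] x by blast
        then show "x \<in> dd \<omega> E ` CX X v E (Suc i)" by blast
      qed
      show "dd \<omega> E ` CX X v E (Suc i) \<subseteq> {x \<in> CX X v E i. dd \<omega> E x = 0}"
        using dd_mem[OF fin] dd_dd[OF lo subset_refl fin] by auto
    qed
    then show ?thesis by (simp add: z_def b_def)
  qed
  have b0: "b 0 = 0"
  proof -
    have "dd \<omega> E ` CX X v E 0 = {0}"
    proof
      show "dd \<omega> E ` CX X v E 0 \<subseteq> {0}" using dd_CX0[OF _ fin] by auto
      show "{0} \<subseteq> dd \<omega> E ` CX X v E 0" using CX_zero by (auto intro!: image_eqI[where x=0])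
    qed
    then show ?thesis by (simp add: b_def C_dim_zero)
  qed
  have bn: "b (Suc n) = 0"
  proof -
    have "CX X v E (Suc n) = {0}"
    proof
      show "CX X v E (Suc n) \<subseteq> {0}" using CX_big[OF fin] n_def by auto
    qed simp
    then show ?thesis by (simp add: b_def C_dim_zero)
  qed
  have euler: "(\<Sum>i\<le>n. (-1::int) ^ i * h i) = (\<Sum>i\<le>n. (-1::int) ^ i * int (c i))"
  proof -
    have "(\<Sum>i\<le>n. (-1::int) ^ i * h i) =
        (\<Sum>i\<le>n. (-1::int) ^ i * int (c i) - (-1::int) ^ i * (int (b i) + int (b (Suc i))))"
      by (rule sum.cong[OF refl]) (simp add: h_def cz algebra_simps)
    also have "\<dots> = (\<Sum>i\<le>n. (-1::int) ^ i * int (c i)) - (\<Sum>i\<le>n. (-1::int) ^ i * (int (b i) + int (b (Suc i))))"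
      by (simp add: sum_subtractf)
    also have "(\<Sum>i\<le>n. (-1::int) ^ i * (int (b i) + int (b (Suc i)))) = 0"
      using telescope[where n=n and b="\<lambda>i. int (b i)"] b0 bn by simp
    finally show ?thesis by simp
  qed
  have lhs: "(\<Sum>i\<le>n. (-1::int) ^ i * h i) = (-1) ^ p * h p"
  proof -
    have "(\<Sum>i\<le>n. (-1::int) ^ i * h i) = (-1) ^ p * h p + (\<Sum>i\<in>{..n} - {p}. (-1::int) ^ i * h i)"
      using sum.remove[of "{..n}" p "\<lambda>i. (-1::int) ^ i * h i"] pn by simp
    also have "(\<Sum>i\<in>{..n} - {p}. (-1::int) ^ i * h i) = 0"
      by (rule sum.neutral) (auto simp: h_def ex)
    finally show ?thesis by simp
  qed
  define dw where "dw J = W.dim (X \<union> v ` J)" for J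
  have rhs1: "(\<Sum>i\<le>n. (-1::int) ^ i * int (c i)) = (\<Sum>A\<in>Pow E. (-1::int) ^ card A * int (dw (E - A)))"
  proof -
    have "(\<Sum>i\<le>n. (-1::int) ^ i * int (c i)) =
        (\<Sum>i\<le>n. \<Sum>A\<in>{A. A \<in> Pow E \<and> card A = i}. (-1::int) ^ card A * int (dw (E - A)))"
    proof (rule sum.cong[OF refl])
      fix i
      have "c i = (\<Sum>A\<in>{A. A \<subseteq> E \<and> card A = i}. dw (E - A))"
        unfolding c_def dw_def by (rule CX_dim[OF fin finX])
      then show "(-1::int) ^ i * int (c i) = (\<Sum>A\<in>{A. A \<in> Pow E \<and> card A = i}. (-1::int) ^ card A * int (dw (E - A)))"
        by (simp add: sum_distrib_left)
    qed
    also have "\<dots> = (\<Sum>A\<in>Pow E. (-1::int) ^ card A * int (dw (E - A)))"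
      by (rule sum.group) (use fin card_mono in \<open>auto simp: n_def\<close>)
    finally show ?thesis .
  qed
  have rhs2: "(\<Sum>A\<in>Pow E. (-1::int) ^ card A * int (dw (E - A))) = (\<Sum>J\<in>Pow E. (-1::int) ^ card (E - J) * int (dw J))"
  proof -
    have bij: "bij_betw (\<lambda>J. E - J) (Pow E) (Pow E)"
      by (rule bij_betw_byWitness[where f'="\<lambda>J. E - J"]) auto
    have "(\<Sum>J\<in>Pow E. (-1::int) ^ card (E - J) * int (dw (E - (E - J)))) = (\<Sum>A\<in>Pow E. (-1::int) ^ card A * int (dw (E - A)))"
      by (rule sum.reindex_bij_betw[OF bij])
    moreover have "(\<Sum>J\<in>Pow E. (-1::int) ^ card (E - J) * int (dw (E - (E - J)))) = (\<Sum>J\<in>Pow E. (-1::int) ^ card (E - J) * int (dw J))"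
      by (rule sum.cong[OF refl]) (auto simp: double_diff)
    ultimately show ?thesis by simp
  qed
  define S where "S = (\<Sum>J\<in>Pow E. (-1::int) ^ card J * rk X v J)"
  have rhs3: "(\<Sum>J\<in>Pow E. (-1::int) ^ card (E - J) * int (dw J)) = (-1) ^ n * S"
  proof -
    have "(\<Sum>J\<in>Pow E. (-1::int) ^ card (E - J) * int (dw J)) =
        (\<Sum>J\<in>Pow E. (-1) ^ n * (int (W.dim X) * (-1) ^ card J) + (-1) ^ n * ((-1) ^ card J * rk X v J))"
    proof (rule sum.cong[OF refl])
      fix J assume J: "J \<in> Pow E"
      then have JE: "J \<subseteq> E" by auto
      then have fJ: "finite J" using fin finite_subset by auto
      have "card (E - J) = n - card J" "card J \<le> n"
        using card_Diff_subset[OF fJ JE] card_mono[OF fin JE] by (auto simp: n_def)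
      then show "(-1::int) ^ card (E - J) * int (dw J) =
          (-1) ^ n * (int (W.dim X) * (-1) ^ card J) + (-1) ^ n * ((-1) ^ card J * rk X v J)"
      proof -
        have e1: "(-1::int) ^ card (E - J) = (-1) ^ n * (-1) ^ card J"
          using \<open>card (E - J) = n - card J\<close> \<open>card J \<le> n\<close> neg1_diff by simp
        show ?thesis unfolding e1 rk_def dw_def by algebra
      qed
    qed
    also have "\<dots> = (-1) ^ n * (int (W.dim X) * (\<Sum>J\<in>Pow E. (-1) ^ card J)) + (-1) ^ n * S"
      by (simp add: sum.distrib sum_distrib_left S_def)
    also have "\<dots> = (-1) ^ n * S" using altsum_pow[OF fin ne] by simp
    finally show ?thesis .
  qed
  have "(-1::int) ^ p * h p = (-1) ^ n * S" using euler lhs rhs1 rhs2 rhs3 by simp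
  then have "(-1::int) ^ p * ((-1) ^ p * h p) = (-1) ^ p * ((-1) ^ n * S)" by simp
  moreover have e: "(-1::int) ^ n = (-1) ^ p * (-1) ^ nat r" by (simp add: np power_add)
  ultimately have "h p = (-1) ^ p * ((-1) ^ p * ((-1) ^ nat r * S))" by (simp add: mult.assoc)
  then have hp: "h p = (-1) ^ nat r * S" by simp
  show ?thesis
  proof (cases "i = p")
    case True
    then show ?thesis using hp ip by (simp add: h_def z_def b_def S_def r_def n_def)
  next
    case False
    then show ?thesis using ex[OF False] ip by (simp add: z_def b_def r_def n_def)
  qed
qed

theorem corollary4p6:
  fixes m :: nat and Gb :: "'g set" and dG :: "'g \<Rightarrow> nat \<Rightarrow> int"
    and S :: "'s set" and dS :: "'s \<Rightarrow> nat \<Rightarrow> int"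
    and c :: "'g \<Rightarrow> 's \<Rightarrow> 'k::field"
    and \<alpha> :: "nat \<Rightarrow> int" and Il Iu :: "'s set" and \<omega> :: "'s rel"
  assumes pres: "min_mh_presentation m Gb dG S dS c"
    and gen: "generic_with S dS \<alpha> Il Iu"
    and ord: "linear_order_on Il \<omega>" "\<omega> \<subseteq> Il \<times> Il"
  shows "\<forall>i::nat. homology_dim Gb c Il Iu \<omega> i =
           (if int i = int (card Il) - rank_alpha Gb c Il Iu Il
            then beta_alpha Gb c Il Iu else 0)"
proof
  fix i :: nat
  have finS: "finite S" using pres by (simp add: min_mh_presentation_def)
  have fib: "fibre S dS \<alpha> = {A. Il \<subseteq> A \<and> A \<subseteq> Iu}" and lam: "\<alpha> \<in> Lambda S dS"
    using gen by (auto simp: generic_with_def)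
  obtain A0 where A0: "A0 \<subseteq> S" "A0 \<noteq> {}" "mdeg_set dS A0 = \<alpha>" using lam unfolding Lambda_def by blast
  then have "A0 \<in> fibre S dS \<alpha>" unfolding fibre_def by blast
  then have IlA0: "Il \<subseteq> A0" "A0 \<subseteq> Iu" using fib by blast+
  then have "Iu \<in> {A. Il \<subseteq> A \<and> A \<subseteq> Iu}" by blast
  then have "Iu \<in> fibre S dS \<alpha>" using fib by simp
  then have IuS: "Iu \<subseteq> S" unfolding fibre_def by blast
  have IlIu: "Il \<subseteq> Iu" using IlA0 by auto
  have finIu: "finite Iu" using finite_subset[OF IuS finS] .
  have finIl: "finite Il" using finite_subset[OF IlIu finIu] .
  have neIl: "Il \<noteq> {}"
  proof
    assume "Il = {}"
    then have "{} \<in> {A. Il \<subseteq> A \<and> A \<subseteq> Iu}" by blast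
    then have "{} \<in> fibre S dS \<alpha>" using fib by simp
    then show False unfolding fibre_def by blast
  qed
  define X where "X = phi_vec Gb c ` (Iu - Il)"
  define v where "v = phi_vec Gb c"
  have finX: "finite X" using finIu by (simp add: X_def)
  have cpxeq: "cpx Gb c Il Iu j = CX X v Il j" for j
  proof -
    have "VB Gb c (Iu - A) = W.span (X \<union> v ` (Il - A))" if "A \<subseteq> Il" for A
    proof -
      have "Iu - A = (Iu - Il) \<union> (Il - A)" using that IlIu by auto
      then show ?thesis by (simp add: VB_def X_def v_def image_Un)
    qed
    note VBeq = this
    have z0: "(\<lambda>g. 0) = (0::'g \<Rightarrow> 'k)" by (simp add: fun_eq_iff)
    show ?thesis unfolding cpx_def CX_def z0
    proof (rule Collect_cong)
      fix x :: "'s set \<Rightarrow> 'g \<Rightarrow> 'k"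
      show "(\<forall>A. (A \<subseteq> Il \<and> card A = j \<longrightarrow> x A \<in> VB Gb c (Iu - A)) \<and> (\<not> (A \<subseteq> Il \<and> card A = j) \<longrightarrow> x A = 0)) =
        (\<forall>A. (A \<subseteq> Il \<and> card A = j \<longrightarrow> x A \<in> W.span (X \<union> v ` (Il - A))) \<and> (\<not> (A \<subseteq> Il \<and> card A = j) \<longrightarrow> x A = 0))"
        using VBeq by metis
    qed
  qed
  have ddeq: "cpx_d \<omega> Il = dd \<omega> Il" by (rule cpx_d_dd[OF ord(1) finIl subset_refl])
  have rkeq: "rank_alpha Gb c Il Iu J = rk X v J" for J
  proof -
    have dv: "dimW (VB Gb c B) = W.dim (phi_vec Gb c ` B)" for B by (simp add: dimW_def VB_def)
    show ?thesis unfolding rank_alpha_def rk_def dv X_def v_def image_Un ..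
  qed
  have "homology_dim Gb c Il Iu \<omega> i =
      int (C.dim {x \<in> CX X v Il i. dd \<omega> Il x = 0}) - int (C.dim (dd \<omega> Il ` CX X v Il (Suc i)))"
  proof -
    have z0: "(\<lambda>A g. 0) = (0::'s set \<Rightarrow> 'g \<Rightarrow> 'k)" by (simp add: fun_eq_iff)
    show ?thesis unfolding homology_dim_def cpxeq ddeq dimC_def z0 ..
  qed
  also have "\<dots> = (if int i = int (card Il) - rk X v Il
     then (-1) ^ nat (rk X v Il) * (\<Sum>J\<in>Pow Il. (-1) ^ card J * rk X v J) else 0)"
    by (rule homology_main[OF ord(1) finIl neIl finX])
  finally show "homology_dim Gb c Il Iu \<omega> i =
           (if int i = int (card Il) - rank_alpha Gb c Il Iu Il
            then beta_alpha Gb c Il Iu else 0)"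
    by (simp add: rkeq beta_alpha_def)
qed


end
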